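(* Let $f\in\mathbb C[x_1,\dots,x_n]$ be a nonzero homogeneous polynomial and $d\in\mathbb N$. Then $b_{\mathrm{Ann}(1/f),\mathbf e}(s)=s+d$ if and only if $f$ has degree $d$, where $\mathbf e=(1,\dots,1)$.
   Context: $D_n$ is the $n$-th Weyl algebra ($\partial_ix_j=x_j\partial_i+\delta_{ij}$); ideals are left ideals. For $\omega\in\mathbb R^n$, the $(-\omega,\omega)$-weight of $x^\alpha\partial^\beta$ is $-\langle\omega,\alpha\rangle+\langle\omega,\beta\rangle$; $\mathrm{in}_{(-\omega,\omega)}(I)$ is the left ideal generated by the maximal-weight parts of the elements of $I$. For a holonomic ideal $I$ and $\omega\neq0$, with $s=\sum_i\omega_ix_i\partial_i$, the b-function $b_{I,\omega}(s)$ is the monic generator of $\mathrm{in}_{(-\omega,\omega)}(I)\cap\mathbb C[s]$. $\mathrm{Ann}(1/f)=\{P\in D_n:P\bullet f^{-1}=0\}$ with $x_i\bullet g=x_ig$, $\partial_i\bullet g=\partial g/\partial x_i$. $\mathbb N=\{0,1,2,\dots\}$. *)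

theory Defs
  imports "HOL-Analysis.Analysis" "HOL-Computational_Algebra.Polynomial"
begin

(* Variables are indexed by 0..n-1. Exponent vectors are functions nat => nat
   (required to vanish at indices >= n). *)

type_synonym expo = "nat \<Rightarrow> nat"

type_synonym cpoly = "expo \<Rightarrow> complex"

definition mpolys :: "nat \<Rightarrow> cpoly set" where
  "mpolys n = {f. finite {a. f a \<noteq> 0} \<and> (\<forall>a. f a \<noteq> 0 \<longrightarrow> (\<forall>i\<ge>n. a i = 0))}"

definition expo_deg :: "nat \<Rightarrow> expo \<Rightarrow> nat" where
  "expo_deg n a = (\<Sum>i<n. a i)"

definition mpoly_eval :: "nat \<Rightarrow> cpoly \<Rightarrow> (nat \<Rightarrow> complex) \<Rightarrow> complex" where
  "mpoly_eval n f z = (\<Sum>a\<in>{a. f a \<noteq> 0}. f a * (\<Prod>i<n. z i ^ a i))"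

definition homogeneous :: "nat \<Rightarrow> cpoly \<Rightarrow> bool" where
  "homogeneous n f \<longleftrightarrow> (\<forall>a b. f a \<noteq> 0 \<longrightarrow> f b \<noteq> 0 \<longrightarrow> expo_deg n a = expo_deg n b)"

definition total_degree :: "nat \<Rightarrow> cpoly \<Rightarrow> nat" where
  "total_degree n f = Max (expo_deg n ` {a. f a \<noteq> 0})"

(* ---------- The Weyl algebra D_n, elements in normal-ordered form ----------
   P = sum_{(a,b)} P(a,b) x^a \<partial>^b *)

type_synonym weyl = "expo \<times> expo \<Rightarrow> complex"

definition weyl_elems :: "nat \<Rightarrow> weyl set" where
  "weyl_elems n = {P. finite {m. P m \<noteq> 0} \<and>
      (\<forall>a b. P (a, b) \<noteq> 0 \<longrightarrow> (\<forall>i\<ge>n. a i = 0 \<and> b i = 0))}"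

definition weyl_one :: weyl where
  "weyl_one = (\<lambda>(a, b). if a = (\<lambda>_. 0) \<and> b = (\<lambda>_. 0) then 1 else 0)"

definition lmul_x :: "nat \<Rightarrow> weyl \<Rightarrow> weyl" where
  "lmul_x i P = (\<lambda>(a, b). if 0 < a i then P (a(i := a i - 1), b) else 0)"

(* left multiplication by \<partial>_i :  \<partial>_i x^a \<partial>^b = x^a \<partial>^(b+e_i) + a_i x^(a-e_i) \<partial>^b *)
definition lmul_d :: "nat \<Rightarrow> weyl \<Rightarrow> weyl" where
  "lmul_d i P = (\<lambda>(a, b). (if 0 < b i then P (a, b(i := b i - 1)) else 0)
                          + of_nat (a i + 1) * P (a(i := a i + 1), b))"

inductive_set lideal :: "nat \<Rightarrow> weyl set \<Rightarrow> weyl set" for n S where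
  gen: "P \<in> S \<Longrightarrow> P \<in> lideal n S"
| zero: "(\<lambda>_. 0) \<in> lideal n S"
| add: "P \<in> lideal n S \<Longrightarrow> Q \<in> lideal n S \<Longrightarrow> (\<lambda>m. P m + Q m) \<in> lideal n S"
| smult: "P \<in> lideal n S \<Longrightarrow> (\<lambda>m. c * P m) \<in> lideal n S"
| lx: "P \<in> lideal n S \<Longrightarrow> i < n \<Longrightarrow> lmul_x i P \<in> lideal n S"
| ld: "P \<in> lideal n S \<Longrightarrow> i < n \<Longrightarrow> lmul_d i P \<in> lideal n S"

definition partial :: "nat \<Rightarrow> ((nat \<Rightarrow> complex) \<Rightarrow> complex) \<Rightarrow> (nat \<Rightarrow> complex) \<Rightarrow> complex" where
  "partial i h = (\<lambda>z. deriv (\<lambda>t. h (z(i := t))) (z i))"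

definition dpow :: "nat \<Rightarrow> expo \<Rightarrow> ((nat \<Rightarrow> complex) \<Rightarrow> complex) \<Rightarrow> (nat \<Rightarrow> complex) \<Rightarrow> complex" where
  "dpow n b g = foldr (\<lambda>i h. (partial i ^^ b i) h) [0..<n] g"

definition weyl_act :: "nat \<Rightarrow> weyl \<Rightarrow> ((nat \<Rightarrow> complex) \<Rightarrow> complex) \<Rightarrow> (nat \<Rightarrow> complex) \<Rightarrow> complex" where
  "weyl_act n P g = (\<lambda>z. \<Sum>m\<in>{m. P m \<noteq> 0}. P m * (\<Prod>i<n. z i ^ fst m i) * dpow n (snd m) g z)"

definition Ann_inv :: "nat \<Rightarrow> cpoly \<Rightarrow> weyl set" where
  "Ann_inv n f = {P \<in> weyl_elems n. \<forall>z. mpoly_eval n f z \<noteq> 0 \<longrightarrow>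
       weyl_act n P (\<lambda>w. 1 / mpoly_eval n f w) z = 0}"

definition weight :: "nat \<Rightarrow> (nat \<Rightarrow> real) \<Rightarrow> expo \<times> expo \<Rightarrow> real" where
  "weight n \<omega> m = - (\<Sum>i<n. \<omega> i * real (fst m i)) + (\<Sum>i<n. \<omega> i * real (snd m i))"

definition init_form :: "nat \<Rightarrow> (nat \<Rightarrow> real) \<Rightarrow> weyl \<Rightarrow> weyl" where
  "init_form n \<omega> P = (let M = Max (weight n \<omega> ` {m. P m \<noteq> 0}) in
      (\<lambda>m. if weight n \<omega> m = M then P m else 0))"

definition init_ideal :: "nat \<Rightarrow> (nat \<Rightarrow> real) \<Rightarrow> weyl set \<Rightarrow> weyl set" where
  "init_ideal n \<omega> I = lideal n {init_form n \<omega> P | P. P \<in> I \<and> P \<noteq> (\<lambda>_. 0)}"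

definition lmul_s :: "nat \<Rightarrow> (nat \<Rightarrow> real) \<Rightarrow> weyl \<Rightarrow> weyl" where
  "lmul_s n \<omega> Q = (\<lambda>m. \<Sum>i<n. complex_of_real (\<omega> i) * lmul_x i (lmul_d i Q) m)"

definition eval_s :: "nat \<Rightarrow> (nat \<Rightarrow> real) \<Rightarrow> complex poly \<Rightarrow> weyl" where
  "eval_s n \<omega> p = (\<lambda>m. \<Sum>k\<le>degree p. coeff p k * ((lmul_s n \<omega> ^^ k) weyl_one) m)"

(* b-function: the monic generator of in_(-\<omega>,\<omega>)(I) \<inter> C[s]
   (0 if this intersection is zero) *)
definition bfunction :: "nat \<Rightarrow> (nat \<Rightarrow> real) \<Rightarrow> weyl set \<Rightarrow> complex poly" where
  "bfunction n \<omega> I = (THE b. (b = 0 \<or> lead_coeff b = 1) \<and>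
      {p. eval_s n \<omega> p \<in> init_ideal n \<omega> I} = {q * b | q. True})"

end

theory Submission
  imports Defs
begin

inductive_set pf :: "((nat \<Rightarrow> complex) \<Rightarrow> complex) set" where
  pf_const: "(\<lambda>_. c) \<in> pf"
| pf_coord: "(\<lambda>z. z i) \<in> pf"
| pf_add: "p \<in> pf \<Longrightarrow> q \<in> pf \<Longrightarrow> (\<lambda>z. p z + q z) \<in> pf"
| pf_mult: "p \<in> pf \<Longrightarrow> q \<in> pf \<Longrightarrow> (\<lambda>z. p z * q z) \<in> pf"

lemma pf_deriv_ex:
  assumes "p \<in> pf"
  shows "\<exists>q\<in>pf. \<forall>z. ((\<lambda>t. p (z(i:=t))) has_field_derivative q z) (at (z i))"
  using assms
proof induction
  case (pf_const c)
  show ?case by (rule bexI[of _ "\<lambda>_. 0"]) (auto intro: pf.intros)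
next
  case (pf_coord j)
  show ?case
  proof (cases "j = i")
    case True
    then show ?thesis by (intro bexI[of _ "\<lambda>_. 1"]) (auto intro!: derivative_eq_intros pf.intros)
  next
    case False
    then show ?thesis by (intro bexI[of _ "\<lambda>_. 0"]) (auto intro!: derivative_eq_intros pf.intros)
  qed
next
  case (pf_add p q)
  then obtain p' q' where p': "p' \<in> pf" "\<forall>z. ((\<lambda>t. p (z(i:=t))) has_field_derivative p' z) (at (z i))"
    and q': "q' \<in> pf" "\<forall>z. ((\<lambda>t. q (z(i:=t))) has_field_derivative q' z) (at (z i))" by blast
  have *: "((\<lambda>t. p (z(i:=t)) + q (z(i:=t))) has_field_derivative (p' z + q' z)) (at (z i))" for z
    using DERIV_add[OF p'(2)[rule_format, of z] q'(2)[rule_format, of z]] by simp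
  show ?case
    apply (rule bexI[of _ "\<lambda>z. p' z + q' z"])
     apply (rule allI, rule *)
    by (rule pf.pf_add[OF p'(1) q'(1)])
next
  case (pf_mult p q)
  then obtain p' q' where p': "p' \<in> pf" "\<forall>z. ((\<lambda>t. p (z(i:=t))) has_field_derivative p' z) (at (z i))"
    and q': "q' \<in> pf" "\<forall>z. ((\<lambda>t. q (z(i:=t))) has_field_derivative q' z) (at (z i))" by blast
  have *: "((\<lambda>t. p (z(i:=t)) * q (z(i:=t))) has_field_derivative (p' z * q z + q' z * p z)) (at (z i))" for z
    using DERIV_mult[OF p'(2)[rule_format, of z] q'(2)[rule_format, of z]] by simp
  show ?case
    apply (rule bexI[of _ "\<lambda>z. p' z * q z + q' z * p z"])
     apply (rule allI, rule *)
    by (rule pf.pf_add[OF pf.pf_mult[OF p'(1) pf_mult(2)] pf.pf_mult[OF q'(1) pf_mult(1)]])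
qed

lemma pf_partial_deriv:
  assumes "p \<in> pf"
  shows "((\<lambda>t. p (z(i:=t))) has_field_derivative partial i p (z(i:=s))) (at s)"
    and "partial i p \<in> pf"
proof -
  obtain q where q: "q \<in> pf" "\<forall>z. ((\<lambda>t. p (z(i:=t))) has_field_derivative q z) (at (z i))"
    using pf_deriv_ex[OF assms] by blast
  have eq: "partial i p = q"
    unfolding partial_def using q(2) by (auto intro!: DERIV_imp_deriv)
  show "partial i p \<in> pf" using eq q by simp
  show "((\<lambda>t. p (z(i:=t))) has_field_derivative partial i p (z(i:=s))) (at s)"
    using q(2)[rule_format, of "z(i:=s)"] eq by simp
qed

lemma pf_partial_deriv': "p \<in> pf \<Longrightarrow> ((\<lambda>t. p (z(i:=t))) has_field_derivative partial i p z) (at (z i))"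
  using pf_partial_deriv(1)[of p z i "z i"] by simp

lemma partial_eqI: "((\<lambda>t. h (z(i:=t))) has_field_derivative D) (at (z i)) \<Longrightarrow> partial i h z = D"
  unfolding partial_def by (rule DERIV_imp_deriv)

lemma partial_const[simp]: "partial i (\<lambda>_. c) = (\<lambda>_. 0)"
  by (rule ext, rule partial_eqI) simp

lemma partial_coord: "partial i (\<lambda>z. z j) = (\<lambda>_. if j = i then 1 else 0)"
  by (rule ext, rule partial_eqI) (auto intro!: derivative_eq_intros)

lemma partial_add_pf: "p \<in> pf \<Longrightarrow> q \<in> pf \<Longrightarrow> partial i (\<lambda>z. p z + q z) = (\<lambda>z. partial i p z + partial i q z)"
  by (rule ext, rule partial_eqI) (auto intro!: DERIV_add pf_partial_deriv')

lemma partial_mult_pf: "p \<in> pf \<Longrightarrow> q \<in> pf \<Longrightarrow>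
   partial i (\<lambda>z. p z * q z) = (\<lambda>z. partial i p z * q z + p z * partial i q z)"
proof (rule ext, rule partial_eqI)
  fix z assume "p \<in> pf" "q \<in> pf"
  from DERIV_mult[OF pf_partial_deriv'[OF this(1)] pf_partial_deriv'[OF this(2)], of z i z i]
  show "((\<lambda>t. p (z(i:=t)) * q (z(i:=t))) has_field_derivative partial i p z * q z + p z * partial i q z) (at (z i))"
    by (simp add: mult.commute)
qed

lemma pf_partial: "p \<in> pf \<Longrightarrow> partial i p \<in> pf"
  using pf_partial_deriv(2) .

lemma pf_commute: "p \<in> pf \<Longrightarrow> partial i (partial j p) = partial j (partial i p)"
proof (induction rule: pf.induct)
  case (pf_const c) then show ?case by simp
next
  case (pf_coord k) then show ?case by (simp add: partial_coord)
next
  case (pf_add p q)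
  then show ?case by (simp add: partial_add_pf pf_partial)
next
  case (pf_mult p q)
  have pp: "partial i p \<in> pf" "partial j p \<in> pf" "partial i q \<in> pf" "partial j q \<in> pf"
    using pf_mult by (auto intro: pf_partial)
  show ?case
    using pf_mult pp
    by (simp add: partial_mult_pf partial_add_pf pf_partial pf.intros algebra_simps)
qed

lemma pf_cmult: "p \<in> pf \<Longrightarrow> (\<lambda>z. c * p z) \<in> pf"
  by (rule pf_mult[OF pf_const])

lemma pf_sum: "finite A \<Longrightarrow> (\<And>a. a \<in> A \<Longrightarrow> p a \<in> pf) \<Longrightarrow> (\<lambda>z. \<Sum>a\<in>A. p a z) \<in> pf"
  by (induction A rule: finite_induct) (auto intro: pf.intros)

lemma pf_prod: "finite A \<Longrightarrow> (\<And>a. a \<in> A \<Longrightarrow> p a \<in> pf) \<Longrightarrow> (\<lambda>z. \<Prod>a\<in>A. p a z) \<in> pf"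
  by (induction A rule: finite_induct) (auto intro: pf.intros)

lemma pf_power: "p \<in> pf \<Longrightarrow> (\<lambda>z. p z ^ k) \<in> pf"
  by (induction k) (auto intro: pf.intros)

lemma pf_mono: "(\<lambda>z. \<Prod>j<n. z j ^ a j) \<in> pf"
  by (rule pf_prod) (auto intro: pf_power pf.intros)

lemma pf_mpoly_eval: "f \<in> mpolys n \<Longrightarrow> mpoly_eval n f \<in> pf"
  unfolding mpoly_eval_def mpolys_def
  by (auto intro!: pf_sum pf_cmult pf_mono)

lemma partial_diff_pf: "p \<in> pf \<Longrightarrow> q \<in> pf \<Longrightarrow> partial i (\<lambda>z. p z - q z) = (\<lambda>z. partial i p z - partial i q z)"
  by (rule ext, rule partial_eqI) (auto intro!: DERIV_diff pf_partial_deriv')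

lemma partial_cmult_pf: "p \<in> pf \<Longrightarrow> partial i (\<lambda>z. c * p z) = (\<lambda>z. c * partial i p z)"
  by (rule ext, rule partial_eqI) (auto intro!: DERIV_cmult pf_partial_deriv')

lemma pf_diff: "p \<in> pf \<Longrightarrow> q \<in> pf \<Longrightarrow> (\<lambda>z. p z - q z) \<in> pf"
proof -
  assume a: "p \<in> pf" "q \<in> pf"
  have "(\<lambda>z. p z + (-1) * q z) \<in> pf" by (intro pf.intros a)
  then show ?thesis by simp
qed

locale ratctx =
  fixes F :: "(nat \<Rightarrow> complex) \<Rightarrow> complex"
  assumes F_pf: "F \<in> pf"
begin

definition U where "U = {z. F z \<noteq> 0}"
definition eqU where "eqU h1 h2 \<longleftrightarrow> (\<forall>w\<in>U. h1 w = h2 w)"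
definition Cl where "Cl = {h. \<exists>p\<in>pf. \<exists>k. \<forall>w\<in>U. h w = p w / F w ^ k}"

lemma U_near:
  assumes "w \<in> U"
  shows "eventually (\<lambda>t. w(i:=t) \<in> U) (nhds (w i))"
proof -
  have "isCont (\<lambda>t. F (w(i:=t))) (w i)"
    using DERIV_isCont[OF pf_partial_deriv'[OF F_pf]] .
  then have "((\<lambda>t. F (w(i:=t))) \<longlongrightarrow> F w) (at (w i))"
    by (simp add: isCont_def)
  moreover have "F w \<noteq> 0" using assms by (simp add: U_def)
  ultimately have "eventually (\<lambda>t. F (w(i:=t)) \<noteq> 0) (at (w i))"
    using tendsto_imp_eventually_ne by blast
  then show ?thesis using assms
    by (simp add: eventually_nhds_conv_at U_def)
qed

lemma eqU_refl[simp]: "eqU h h" by (simp add: eqU_def)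
lemma eqU_sym: "eqU h1 h2 \<Longrightarrow> eqU h2 h1" by (simp add: eqU_def)
lemma eqU_trans: "eqU h1 h2 \<Longrightarrow> eqU h2 h3 \<Longrightarrow> eqU h1 h3" by (simp add: eqU_def)

lemma partial_local:
  assumes "eqU h1 h2"
  shows "eqU (partial i h1) (partial i h2)"
  unfolding eqU_def
proof
  fix w assume w: "w \<in> U"
  have "eventually (\<lambda>t. h1 (w(i:=t)) = h2 (w(i:=t))) (nhds (w i))"
    using U_near[OF w, of i] assms unfolding eqU_def by (auto elim: eventually_mono)
  then show "partial i h1 w = partial i h2 w"
    unfolding partial_def by (rule deriv_cong_ev) simp
qed

lemma funpow_local: "eqU h1 h2 \<Longrightarrow> eqU ((partial j ^^ k) h1) ((partial j ^^ k) h2)"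
  by (induction k) (auto intro: partial_local)

lemma alg1: "(x::complex) \<noteq> 0 \<Longrightarrow> (a * x^Suc k' - b * (of_nat (Suc k') * (c * x^(Suc k' - Suc 0)))) / (x^Suc k' * x^Suc k') = (a*x - of_nat (Suc k') * b * c)/x^(Suc k'+1)"
proof -
  assume x: "x \<noteq> 0"
  have "a * x^Suc k' - b * (of_nat (Suc k') * (c * x^(Suc k' - Suc 0))) = x^k' * (a*x - of_nat (Suc k') * b * c)"
    by (simp add: algebra_simps)
  moreover have "x^Suc k' * x^Suc k' = x^k' * x^(Suc k'+1)" by (simp add: algebra_simps)
  ultimately show ?thesis using x by simp
qed

lemma quot_deriv:
  assumes p: "p \<in> pf" and w: "w \<in> U"
  shows "((\<lambda>t. p (w(i:=t)) / F (w(i:=t)) ^ k) has_field_derivative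
          (partial i p w * F w - of_nat k * p w * partial i F w) / F w ^ (k+1)) (at (w i))"
proof -
  have Fw: "F w \<noteq> 0" using w by (simp add: U_def)
  have d1: "((\<lambda>t. p (w(i:=t))) has_field_derivative partial i p w) (at (w i))"
    by (rule pf_partial_deriv'[OF p])
  have d2: "((\<lambda>t. F (w(i:=t)) ^ k) has_field_derivative of_nat k * (partial i F w * F w ^ (k - Suc 0))) (at (w i))"
    using DERIV_power[OF pf_partial_deriv'[OF F_pf, of w i], of k] by simp
  have "((\<lambda>t. p (w(i:=t)) / F (w(i:=t)) ^ k) has_field_derivative
          (partial i p w * F w ^ k - p w * (of_nat k * (partial i F w * F w ^ (k - Suc 0)))) / (F w ^ k * F w ^ k)) (at (w i))"
    using DERIV_divide[OF d1 d2] Fw by simp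
  moreover have "(partial i p w * F w ^ k - p w * (of_nat k * (partial i F w * F w ^ (k - Suc 0)))) / (F w ^ k * F w ^ k)
     = (partial i p w * F w - of_nat k * p w * partial i F w) / F w ^ (k+1)"
  proof (cases k)
    case 0 then show ?thesis using Fw by simp
  next
    case (Suc k') then show ?thesis using alg1[OF Fw] by simp
  qed
  ultimately show ?thesis by simp
qed

lemma Cl_deriv:
  assumes p: "p \<in> pf" and h: "\<forall>w\<in>U. h w = p w / F w ^ k" and w: "w \<in> U"
  shows "((\<lambda>t. h (w(i:=t))) has_field_derivative
          (partial i p w * F w - of_nat k * p w * partial i F w) / F w ^ (k+1)) (at (w i))"
proof -
  have "eventually (\<lambda>t. p (w(i:=t)) / F (w(i:=t)) ^ k = h (w(i:=t))) (nhds (w i))"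
    using U_near[OF w, of i] h by (auto elim: eventually_mono)
  from DERIV_cong_ev[OF refl this refl] quot_deriv[OF p w, of i k] show ?thesis by (rule iffD1)
qed

lemma Cl_partial_eq:
  assumes p: "p \<in> pf" and h: "\<forall>w\<in>U. h w = p w / F w ^ k"
  shows "eqU (partial i h) (\<lambda>w. (partial i p w * F w - of_nat k * p w * partial i F w) / F w ^ (k+1))"
  unfolding eqU_def
proof
  fix w assume w: "w \<in> U"
  show "partial i h w = (partial i p w * F w - of_nat k * p w * partial i F w) / F w ^ (k+1)"
    by (rule partial_eqI[OF Cl_deriv[OF p h w]])
qed

definition qnum where "qnum i p k = (\<lambda>w. partial i p w * F w - of_nat k * (p w * partial i F w))"

lemma qnum_pf: "p \<in> pf \<Longrightarrow> qnum i p k \<in> pf"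
  unfolding qnum_def by (intro pf_diff pf_cmult pf.intros pf_partial F_pf)

lemma Cl_partial_eq':
  assumes p: "p \<in> pf" and h: "\<forall>w\<in>U. h w = p w / F w ^ k"
  shows "\<forall>w\<in>U. partial i h w = qnum i p k w / F w ^ (k+1)"
  using Cl_partial_eq[OF p h, of i] unfolding eqU_def qnum_def by (simp add: mult.assoc)

lemma Cl_partial: "h \<in> Cl \<Longrightarrow> partial i h \<in> Cl"
  unfolding Cl_def using Cl_partial_eq' qnum_pf by blast

lemma Cl_has_deriv:
  assumes "h \<in> Cl" "w \<in> U"
  shows "((\<lambda>t. h (w(i:=t))) has_field_derivative partial i h w) (at (w i))"
proof -
  obtain p k where pk: "p \<in> pf" "\<forall>w\<in>U. h w = p w / F w ^ k" using assms(1) unfolding Cl_def by blast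
  show ?thesis using Cl_deriv[OF pk assms(2), of i] partial_eqI[OF Cl_deriv[OF pk assms(2), of i]] by simp
qed

lemma Cl_eqU: "h \<in> Cl \<Longrightarrow> eqU h h' \<Longrightarrow> h' \<in> Cl"
  unfolding Cl_def eqU_def by auto

lemma partial_qnum:
  assumes p: "p \<in> pf"
  shows "partial i (qnum j p k) = (\<lambda>w. (partial i (partial j p) w * F w + partial j p w * partial i F w)
            - of_nat k * (partial i p w * partial j F w + p w * partial i (partial j F) w))"
proof -
  have pp: "partial j p \<in> pf" "partial j F \<in> pf"
    using p F_pf by (auto intro: pf_partial)
  have m1: "(\<lambda>w. partial j p w * F w) \<in> pf" "(\<lambda>w. p w * partial j F w) \<in> pf"
    using pp p F_pf by (auto intro: pf.intros)
  have m2: "(\<lambda>w. of_nat k * (p w * partial j F w)) \<in> pf" by (rule pf_cmult[OF m1(2)])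
  show ?thesis
    unfolding qnum_def
    apply (subst partial_diff_pf[OF m1(1) m2])
    apply (subst partial_cmult_pf[OF m1(2)])
    apply (subst partial_mult_pf[OF pp(1) F_pf])
    apply (subst partial_mult_pf[OF p pp(2)])
    by simp
qed

lemma Cl_commute:
  assumes "h \<in> Cl"
  shows "eqU (partial i (partial j h)) (partial j (partial i h))"
proof -
  obtain p k where p: "p \<in> pf" and h: "\<forall>w\<in>U. h w = p w / F w ^ k" using assms unfolding Cl_def by blast
  have A: "\<forall>w\<in>U. partial i (partial j h) w = qnum i (qnum j p k) (k+1) w / F w ^ (k+1+1)"
  proof -
    have e1: "eqU (partial j h) (\<lambda>w. qnum j p k w / F w ^ (k+1))"
      using Cl_partial_eq'[OF p h] unfolding eqU_def by blast
    have "eqU (partial i (partial j h)) (partial i (\<lambda>w. qnum j p k w / F w ^ (k+1)))"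
      by (rule partial_local[OF e1])
    moreover have "\<forall>w\<in>U. partial i (\<lambda>w. qnum j p k w / F w ^ (k+1)) w = qnum i (qnum j p k) (k+1) w / F w ^ (k+1+1)"
      by (rule Cl_partial_eq'[OF qnum_pf[OF p]]) simp
    ultimately show ?thesis unfolding eqU_def by simp
  qed
  have B: "\<forall>w\<in>U. partial j (partial i h) w = qnum j (qnum i p k) (k+1) w / F w ^ (k+1+1)"
  proof -
    have e1: "eqU (partial i h) (\<lambda>w. qnum i p k w / F w ^ (k+1))"
      using Cl_partial_eq'[OF p h] unfolding eqU_def by blast
    have "eqU (partial j (partial i h)) (partial j (\<lambda>w. qnum i p k w / F w ^ (k+1)))"
      by (rule partial_local[OF e1])
    moreover have "\<forall>w\<in>U. partial j (\<lambda>w. qnum i p k w / F w ^ (k+1)) w = qnum j (qnum i p k) (k+1) w / F w ^ (k+1+1)"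
      by (rule Cl_partial_eq'[OF qnum_pf[OF p]]) simp
    ultimately show ?thesis unfolding eqU_def by simp
  qed
  have pp: "partial i p \<in> pf" "partial j p \<in> pf" "partial i F \<in> pf" "partial j F \<in> pf"
    using p F_pf by (auto intro: pf_partial)
  have C: "qnum i (qnum j p k) (k+1) w = qnum j (qnum i p k) (k+1) w" for w
    unfolding qnum_def[of _ "qnum _ p k"] partial_qnum[OF p]
    unfolding qnum_def pf_commute[OF p, of i j] pf_commute[OF F_pf, of i j]
    by (simp add: algebra_simps)
  show ?thesis using A B C unfolding eqU_def by simp
qed

end

definition scal :: "complex \<Rightarrow> (nat \<Rightarrow> complex) \<Rightarrow> (nat \<Rightarrow> complex)" where
  "scal t w = (\<lambda>j. t * w j)"

definition Gf :: "expo \<Rightarrow> nat list \<Rightarrow> ((nat \<Rightarrow> complex) \<Rightarrow> complex) \<Rightarrow> (nat \<Rightarrow> complex) \<Rightarrow> complex" where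
  "Gf b L h = foldr (\<lambda>i h. (partial i ^^ b i) h) L h"

lemma Gf_Nil[simp]: "Gf b [] h = h" by (simp add: Gf_def)
lemma Gf_Cons[simp]: "Gf b (j # L) h = (partial j ^^ b j) (Gf b L h)" by (simp add: Gf_def)

lemma dpow_Gf: "dpow n b h = Gf b [0..<n] h" by (simp add: dpow_def Gf_def)

lemma Gf_cong: "(\<And>j. j \<in> set L \<Longrightarrow> b j = b' j) \<Longrightarrow> Gf b L h = Gf b' L h"
  by (induction L) auto

context ratctx begin

lemma Cl_funpow: "h \<in> Cl \<Longrightarrow> (partial j ^^ k) h \<in> Cl"
  by (induction k) (auto intro: Cl_partial)

lemma Cl_Gf: "h \<in> Cl \<Longrightarrow> Gf b L h \<in> Cl"
  by (induction L) (auto intro: Cl_funpow)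

lemma commute_pow:
  assumes "h \<in> Cl"
  shows "eqU (partial i ((partial j ^^ k) h)) ((partial j ^^ k) (partial i h))"
proof (induction k)
  case 0 then show ?case by simp
next
  case (Suc k)
  have "eqU (partial i (partial j ((partial j ^^ k) h))) (partial j (partial i ((partial j ^^ k) h)))"
    by (rule Cl_commute[OF Cl_funpow[OF assms]])
  moreover have "eqU (partial j (partial i ((partial j ^^ k) h))) (partial j ((partial j ^^ k) (partial i h)))"
    by (rule partial_local[OF Suc])
  ultimately show ?case by (simp add: eqU_trans)
qed

lemma Gf_partial:
  assumes "distinct L" "i \<in> set L" "h \<in> Cl"
  shows "eqU (partial i (Gf b L h)) (Gf (b(i:=Suc (b i))) L h)"
  using assms(1,2)
proof (induction L)
  case Nil then show ?case by simp
next
  case (Cons j L)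
  show ?case
  proof (cases "j = i")
    case True
    then have "i \<notin> set L" using Cons by auto
    then have eq: "Gf (b(i:=Suc (b i))) L h = Gf b L h" by (intro Gf_cong) auto
    have e: "Gf (b(i:=Suc (b i))) (i#L) h = partial i ((partial i ^^ b i) (Gf b L h))"
      by (simp only: Gf_Cons fun_upd_same funpow.simps o_apply eq)
    show ?thesis unfolding True
      apply (subst e) apply (subst Gf_Cons) by (rule eqU_refl)
  next
    case False
    then have iL: "i \<in> set L" "distinct L" using Cons by auto
    have "eqU (partial i ((partial j ^^ b j) (Gf b L h))) ((partial j ^^ b j) (partial i (Gf b L h)))"
      by (rule commute_pow[OF Cl_Gf[OF assms(3)]])
    moreover have "eqU ((partial j ^^ b j) (partial i (Gf b L h))) ((partial j ^^ b j) (Gf (b(i:=Suc (b i))) L h))"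
      by (rule funpow_local[OF Cons.IH[OF iL(2) iL(1)]])
    moreover have e2: "Gf (b(i:=Suc (b i))) (j#L) h = (partial j ^^ b j) (Gf (b(i:=Suc (b i))) L h)"
      using False by (simp only: Gf_Cons fun_upd_apply if_False)
    ultimately show ?thesis apply (subst e2) apply (subst Gf_Cons) by (rule eqU_trans)
  qed
qed

lemma dpow_partial:
  assumes "i < n" "h \<in> Cl"
  shows "eqU (partial i (dpow n b h)) (dpow n (b(i:=Suc (b i))) h)"
  unfolding dpow_Gf using Gf_partial[OF _ _ assms(2)] assms(1) by simp

lemma Cl_dpow: "h \<in> Cl \<Longrightarrow> dpow n b h \<in> Cl"
  unfolding dpow_Gf by (rule Cl_Gf)

end

locale homctx = ratctx +
  fixes D :: nat
  assumes F_hom: "\<And>t w. F (scal t w) = t ^ D * F w"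
begin

definition homk where "homk k h \<longleftrightarrow> (\<forall>w\<in>U. \<forall>t. t \<noteq> 0 \<longrightarrow> t ^ k * h (scal t w) = h w)"

lemma U_scal: "w \<in> U \<Longrightarrow> t \<noteq> 0 \<Longrightarrow> scal t w \<in> U"
  by (simp add: U_def F_hom)

lemma scal_upd: "t \<noteq> 0 \<Longrightarrow> (scal t w)(i:=s) = scal t (w(i:=s/t))"
  by (auto simp: scal_def fun_eq_iff)

lemma scal_inv: "t \<noteq> 0 \<Longrightarrow> scal (1/t) (scal t w) = w"
  by (auto simp: scal_def fun_eq_iff)

lemma homk_partial:
  assumes h: "h \<in> Cl" and hk: "homk k h"
  shows "homk (Suc k) (partial i h)"
  unfolding homk_def
proof (intro ballI allI impI)
  fix w t assume w: "w \<in> U" and t: "(t::complex) \<noteq> 0"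
  define z where "z = scal t w"
  have z: "z \<in> U" using U_scal[OF w t] by (simp add: z_def)
  define D0 where "D0 = partial i h w"
  have d0: "((\<lambda>s. h (w(i:=s))) has_field_derivative D0) (at (w i))"
    unfolding D0_def by (rule Cl_has_deriv[OF h w])
  have dg: "((\<lambda>s. s / t) has_field_derivative 1 / t) (at (z i))"
    using t by (auto intro!: derivative_eq_intros)
  have zi: "z i / t = w i" using t by (simp add: z_def scal_def)
  have d1: "((\<lambda>s. h (w(i:=s / t))) has_field_derivative D0 * (1/t)) (at (z i))"
    using DERIV_chain2[of "\<lambda>s. h (w(i:=s))" D0 "\<lambda>s. s/t" "z i" "1/t" UNIV] d0 dg zi by simp
  have d2: "((\<lambda>s. h (w(i:=s / t)) / t ^ k) has_field_derivative D0 * (1/t) / t ^ k) (at (z i))"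
    by (rule DERIV_cdivide[OF d1])
  have ev: "eventually (\<lambda>s. h (w(i:=s / t)) / t ^ k = h (z(i:=s))) (nhds (z i))"
    using U_near[OF z, of i]
  proof (rule eventually_mono)
    fix s assume s: "z(i:=s) \<in> U"
    have e1: "z(i:=s) = scal t (w(i:=s/t))" unfolding z_def by (rule scal_upd[OF t])
    have "w(i:=s/t) = scal (1/t) (z(i:=s))" using e1 scal_inv[OF t] by simp
    then have "w(i:=s/t) \<in> U" using U_scal[OF s] t by simp
    then have "t ^ k * h (scal t (w(i:=s/t))) = h (w(i:=s/t))" using hk t unfolding homk_def by blast
    then show "h (w(i:=s / t)) / t ^ k = h (z(i:=s))" using e1 t by (simp add: field_simps)
  qed
  have "((\<lambda>s. h (z(i:=s))) has_field_derivative D0 * (1/t) / t ^ k) (at (z i))"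
    using DERIV_cong_ev[OF refl ev refl] d2 by (rule iffD1)
  then have "partial i h z = D0 * (1/t) / t ^ k" by (rule partial_eqI)
  then show "t ^ Suc k * partial i h (scal t w) = partial i h w"
    using t unfolding z_def D0_def by (simp add: field_simps)
qed

lemma homk_funpow: "h \<in> Cl \<Longrightarrow> homk k h \<Longrightarrow> homk (k + m) ((partial j ^^ m) h)"
proof (induction m)
  case 0 then show ?case by simp
next
  case (Suc m)
  then show ?case using homk_partial[OF Cl_funpow[OF Suc.prems(1)] Suc.IH[OF Suc.prems]] by simp
qed

lemma homk_Gf: "h \<in> Cl \<Longrightarrow> homk k h \<Longrightarrow> homk (k + sum_list (map b L)) (Gf b L h)"
proof (induction L)
  case Nil then show ?case by simp
next
  case (Cons j L)
  have "homk (k + sum_list (map b L) + b j) ((partial j ^^ b j) (Gf b L h))"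
    by (rule homk_funpow[OF Cl_Gf[OF Cons.prems(1)] Cons.IH[OF Cons.prems]])
  then show ?case by (simp add: add_ac)
qed

lemma homk_dpow: "h \<in> Cl \<Longrightarrow> homk k h \<Longrightarrow> homk (k + (\<Sum>j<n. b j)) (dpow n b h)"
  using homk_Gf[of h k b "[0..<n]"] unfolding dpow_Gf
  by (simp add: interv_sum_list_conv_sum_set_nat atLeast0LessThan)

definition g where "g = (\<lambda>w. 1 / F w)"

lemma g_Cl: "g \<in> Cl"
  unfolding Cl_def g_def by (rule CollectI, rule bexI[of _ "\<lambda>_. 1"]) (auto intro: pf.intros exI[of _ 1])

lemma g_hom: "homk D g"
  unfolding homk_def g_def by (auto simp: F_hom U_def)

end

definition xmono :: "nat \<Rightarrow> expo \<Rightarrow> (nat \<Rightarrow> complex) \<Rightarrow> complex" where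
  "xmono n a z = (\<Prod>j<n. z j ^ a j)"

lemma weyl_act_superset:
  assumes "finite T" "{m. P m \<noteq> 0} \<subseteq> T"
  shows "weyl_act n P h z = (\<Sum>m\<in>T. P m * xmono n (fst m) z * dpow n (snd m) h z)"
  unfolding weyl_act_def xmono_def
  by (rule sum.mono_neutral_left[OF assms(1) assms(2)]) auto

lemma sum_reindex_into:
  assumes "finite T" "inj_on \<phi> A" "\<phi> ` A \<subseteq> T" "\<And>m. m \<in> T \<Longrightarrow> m \<notin> \<phi> ` A \<Longrightarrow> G m = 0"
  shows "sum G T = sum (G \<circ> \<phi>) A"
proof -
  have "sum G T = sum G (\<phi> ` A)"
    by (rule sum.mono_neutral_right[OF assms(1) assms(3)]) (use assms(4) in auto)
  also have "\<dots> = sum (G \<circ> \<phi>) A" by (rule sum.reindex[OF assms(2)])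
  finally show ?thesis .
qed

lemma lmul_x_apply: "lmul_x i P m = (if 0 < fst m i then P ((fst m)(i := fst m i - 1), snd m) else 0)"
  by (cases m) (simp add: lmul_x_def)

lemma lmul_d_apply: "lmul_d i P m = (if 0 < snd m i then P (fst m, (snd m)(i := snd m i - 1)) else 0)
     + of_nat (fst m i + 1) * P ((fst m)(i := fst m i + 1), snd m)"
  by (cases m) (simp add: lmul_d_def)

definition phx :: "nat \<Rightarrow> expo \<times> expo \<Rightarrow> expo \<times> expo" where
  "phx i m = ((fst m)(i := Suc (fst m i)), snd m)"
definition phd :: "nat \<Rightarrow> expo \<times> expo \<Rightarrow> expo \<times> expo" where
  "phd i m = (fst m, (snd m)(i := Suc (snd m i)))"
definition phm :: "nat \<Rightarrow> expo \<times> expo \<Rightarrow> expo \<times> expo" where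
  "phm i m = ((fst m)(i := fst m i - 1), snd m)"

lemma inj_phx: "inj_on (phx i) A"
  by (rule inj_onI) (auto simp: phx_def fun_eq_iff prod_eq_iff split: if_splits)

lemma inj_phd: "inj_on (phd i) A"
  by (rule inj_onI) (auto simp: phd_def fun_eq_iff prod_eq_iff split: if_splits)

lemma inj_phm: "inj_on (phm i) {m. 0 < fst m i}"
proof (rule inj_onI)
  fix x y assume "x \<in> {m. 0 < fst m i}" "y \<in> {m. 0 < fst m i}" "phm i x = phm i y"
  then show "x = y"
    by (auto simp: phm_def fun_eq_iff prod_eq_iff split: if_splits) (metis Suc_pred)
qed

lemma supp_lmul_x: "{m. lmul_x i P m \<noteq> 0} \<subseteq> phx i ` {m. P m \<noteq> 0}"
proof
  fix m assume "m \<in> {m. lmul_x i P m \<noteq> 0}"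
  then have m: "0 < fst m i" "P ((fst m)(i := fst m i - 1), snd m) \<noteq> 0"
    by (auto simp: lmul_x_apply split: if_splits)
  have "m = phx i ((fst m)(i := fst m i - 1), snd m)"
    using m(1) by (auto simp: phx_def fun_eq_iff prod_eq_iff)
  then show "m \<in> phx i ` {m. P m \<noteq> 0}" using m(2) by blast
qed

lemma supp_lmul_d: "{m. lmul_d i P m \<noteq> 0} \<subseteq> phd i ` {m. P m \<noteq> 0} \<union> phm i ` {m. P m \<noteq> 0 \<and> 0 < fst m i}"
proof
  fix m assume "m \<in> {m. lmul_d i P m \<noteq> 0}"
  then have "(0 < snd m i \<and> P (fst m, (snd m)(i := snd m i - 1)) \<noteq> 0) \<or> P ((fst m)(i := fst m i + 1), snd m) \<noteq> 0"
    by (auto simp: lmul_d_apply split: if_splits)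
  then show "m \<in> phd i ` {m. P m \<noteq> 0} \<union> phm i ` {m. P m \<noteq> 0 \<and> 0 < fst m i}"
  proof
    assume a: "0 < snd m i \<and> P (fst m, (snd m)(i := snd m i - 1)) \<noteq> 0"
    have "m = phd i (fst m, (snd m)(i := snd m i - 1))"
      using a by (auto simp: phd_def fun_eq_iff prod_eq_iff)
    then show ?thesis using a by blast
  next
    assume a: "P ((fst m)(i := fst m i + 1), snd m) \<noteq> 0"
    have "m = phm i ((fst m)(i := fst m i + 1), snd m)"
      by (auto simp: phm_def fun_eq_iff prod_eq_iff)
    then show ?thesis using a by force
  qed
qed

lemma finite_supp_we: "P \<in> weyl_elems n \<Longrightarrow> finite {m. P m \<noteq> 0}"
  by (simp add: weyl_elems_def)

lemma we_intro: "finite {m. P m \<noteq> 0} \<Longrightarrow> (\<And>a b j. P (a, b) \<noteq> 0 \<Longrightarrow> n \<le> j \<Longrightarrow> a j = 0 \<and> b j = 0) \<Longrightarrow> P \<in> weyl_elems n"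
  unfolding weyl_elems_def by blast

lemma we_D: "P \<in> weyl_elems n \<Longrightarrow> P (a, b) \<noteq> 0 \<Longrightarrow> n \<le> j \<Longrightarrow> a j = 0 \<and> b j = 0"
  unfolding weyl_elems_def by blast

lemma we_zero: "(\<lambda>_. 0) \<in> weyl_elems n"
  by (simp add: weyl_elems_def)

lemma we_add: assumes "P \<in> weyl_elems n" "Q \<in> weyl_elems n" shows "(\<lambda>m. P m + Q m) \<in> weyl_elems n"
proof (rule we_intro)
  have "{m. P m + Q m \<noteq> 0} \<subseteq> {m. P m \<noteq> 0} \<union> {m. Q m \<noteq> 0}" by auto
  then show "finite {m. P m + Q m \<noteq> 0}" using assms finite_supp_we finite_subset by blast
next
  fix a b j assume "P (a, b) + Q (a, b) \<noteq> 0" "n \<le> j"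
  then have "P (a, b) \<noteq> 0 \<or> Q (a, b) \<noteq> 0" by auto
  then show "a j = 0 \<and> b j = 0" using we_D[OF assms(1) _ \<open>n \<le> j\<close>] we_D[OF assms(2) _ \<open>n \<le> j\<close>] by blast
qed

lemma we_smult: assumes "P \<in> weyl_elems n" shows "(\<lambda>m. c * P m) \<in> weyl_elems n"
proof (rule we_intro)
  have "{m. c * P m \<noteq> 0} \<subseteq> {m. P m \<noteq> 0}" by auto
  then show "finite {m. c * P m \<noteq> 0}" using assms finite_supp_we finite_subset by blast
next
  fix a b j assume "c * P (a, b) \<noteq> 0" "n \<le> j"
  then show "a j = 0 \<and> b j = 0" using we_D[OF assms, of a b j] by simp
qed

lemma we_lmul_x: assumes "P \<in> weyl_elems n" "i < n" shows "lmul_x i P \<in> weyl_elems n"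
proof (rule we_intro)
  show "finite {m. lmul_x i P m \<noteq> 0}"
    using finite_subset[OF supp_lmul_x] finite_supp_we[OF assms(1)] by blast
next
  fix a b j assume h: "lmul_x i P (a, b) \<noteq> 0" "n \<le> j"
  then have "P (a(i := a i - 1), b) \<noteq> 0" by (simp add: lmul_x_def split: if_splits)
  from we_D[OF assms(1) this h(2)] have "(a(i := a i - 1)) j = 0 \<and> b j = 0" .
  moreover have "j \<noteq> i" using h(2) assms(2) by simp
  ultimately show "a j = 0 \<and> b j = 0" by simp
qed

lemma we_lmul_d: assumes "P \<in> weyl_elems n" "i < n" shows "lmul_d i P \<in> weyl_elems n"
proof (rule we_intro)
  have "finite {m. P m \<noteq> 0 \<and> 0 < fst m i}" using finite_supp_we[OF assms(1)] by (auto intro: finite_subset)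
  then show "finite {m. lmul_d i P m \<noteq> 0}"
    using finite_subset[OF supp_lmul_d] finite_supp_we[OF assms(1)] by blast
next
  fix a b j assume h: "lmul_d i P (a, b) \<noteq> 0" "n \<le> j"
  have ji: "j \<noteq> i" using h(2) assms(2) by simp
  have "P (a, b(i := b i - 1)) \<noteq> 0 \<or> P (a(i := a i + 1), b) \<noteq> 0"
    using h(1) by (auto simp: lmul_d_def split: if_splits)
  then show "a j = 0 \<and> b j = 0"
  proof
    assume "P (a, b(i := b i - 1)) \<noteq> 0"
    from we_D[OF assms(1) this h(2)] ji show ?thesis by simp
  next
    assume "P (a(i := a i + 1), b) \<noteq> 0"
    from we_D[OF assms(1) this h(2)] ji show ?thesis by simp
  qed
qed

lemma weyl_act_zero: "weyl_act n (\<lambda>_. 0) h z = 0"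
  by (simp add: weyl_act_def)

lemma weyl_act_add:
  assumes "P \<in> weyl_elems n" "Q \<in> weyl_elems n"
  shows "weyl_act n (\<lambda>m. P m + Q m) h z = weyl_act n P h z + weyl_act n Q h z"
proof -
  define T where "T = {m. P m \<noteq> 0} \<union> {m. Q m \<noteq> 0}"
  have T: "finite T" using assms by (simp add: T_def finite_supp_we)
  have "weyl_act n (\<lambda>m. P m + Q m) h z = (\<Sum>m\<in>T. (P m + Q m) * xmono n (fst m) z * dpow n (snd m) h z)"
    by (rule weyl_act_superset[OF T]) (auto simp: T_def)
  also have "\<dots> = (\<Sum>m\<in>T. P m * xmono n (fst m) z * dpow n (snd m) h z) + (\<Sum>m\<in>T. Q m * xmono n (fst m) z * dpow n (snd m) h z)"
    by (simp add: sum.distrib algebra_simps)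
  also have "\<dots> = weyl_act n P h z + weyl_act n Q h z"
    by (subst (1 2) weyl_act_superset[OF T]) (auto simp: T_def)
  finally show ?thesis .
qed

lemma weyl_act_smult:
  assumes "P \<in> weyl_elems n"
  shows "weyl_act n (\<lambda>m. c * P m) h z = c * weyl_act n P h z"
proof -
  define T where "T = {m. P m \<noteq> 0}"
  have T: "finite T" using assms by (simp add: T_def finite_supp_we)
  have "weyl_act n (\<lambda>m. c * P m) h z = (\<Sum>m\<in>T. (c * P m) * xmono n (fst m) z * dpow n (snd m) h z)"
    by (rule weyl_act_superset[OF T]) (auto simp: T_def)
  also have "\<dots> = c * (\<Sum>m\<in>T. P m * xmono n (fst m) z * dpow n (snd m) h z)"
    by (simp add: sum_distrib_left algebra_simps)
  also have "\<dots> = c * weyl_act n P h z"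
    by (subst weyl_act_superset[OF T]) (auto simp: T_def)
  finally show ?thesis .
qed

lemma mono_upd_split:
  assumes "i < n"
  shows "xmono n a z = z i ^ a i * (\<Prod>j\<in>{..<n} - {i}. z j ^ a j)"
  unfolding xmono_def using assms by (subst prod.remove[of _ i]) auto

lemma mono_Suc: "i < n \<Longrightarrow> xmono n ((a)(i := Suc (a i))) z = z i * xmono n a z"
proof -
  assume i: "i < n"
  have "(\<Prod>j\<in>{..<n} - {i}. z j ^ (a(i := Suc (a i))) j) = (\<Prod>j\<in>{..<n} - {i}. z j ^ a j)"
    by (rule prod.cong) auto
  then show ?thesis using mono_upd_split[OF i, of "a(i := Suc (a i))"] mono_upd_split[OF i, of a] by simp
qed

lemma weyl_act_lmul_x:
  assumes "P \<in> weyl_elems n" "i < n"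
  shows "weyl_act n (lmul_x i P) h z = z i * weyl_act n P h z"
proof -
  define A where "A = {m. P m \<noteq> 0}"
  have A: "finite A" using assms by (simp add: A_def finite_supp_we)
  have T: "finite (phx i ` A)" using A by simp
  have "weyl_act n (lmul_x i P) h z = (\<Sum>m\<in>phx i ` A. lmul_x i P m * xmono n (fst m) z * dpow n (snd m) h z)"
    by (rule weyl_act_superset[OF T]) (use supp_lmul_x in \<open>auto simp: A_def\<close>)
  also have "\<dots> = (\<Sum>m\<in>A. lmul_x i P (phx i m) * xmono n (fst (phx i m)) z * dpow n (snd (phx i m)) h z)"
    by (subst sum.reindex[OF inj_phx]) simp
  also have "\<dots> = (\<Sum>m\<in>A. z i * (P m * xmono n (fst m) z * dpow n (snd m) h z))"
    by (rule sum.cong) (auto simp: lmul_x_apply phx_def mono_Suc[OF assms(2)])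
  also have "\<dots> = z i * weyl_act n P h z"
    by (simp add: sum_distrib_left[symmetric] weyl_act_superset[OF A] A_def)
  finally show ?thesis .
qed


lemma mono_deriv:
  assumes i: "i < n"
  shows "((\<lambda>t. xmono n a (z(i:=t))) has_field_derivative of_nat (a i) * xmono n (a(i:=a i - 1)) z) (at (z i))"
proof -
  define R where "R = (\<Prod>j\<in>{..<n} - {i}. z j ^ a j)"
  have e1: "xmono n a (z(i:=t)) = t ^ a i * R" for t
    using mono_upd_split[OF i, of a "z(i:=t)"] unfolding R_def
    by (simp add: prod.cong[OF refl, of _ "\<lambda>j. (z(i:=t)) j ^ a j" "\<lambda>j. z j ^ a j"])
  have e2: "xmono n (a(i:=a i - 1)) z = z i ^ (a i - 1) * R"
    using mono_upd_split[OF i, of "a(i:=a i - 1)" z] unfolding R_def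
    by (simp add: prod.cong[OF refl, of _ "\<lambda>j. z j ^ (a(i:=a i - 1)) j" "\<lambda>j. z j ^ a j"])
  have "((\<lambda>t. t ^ a i * R) has_field_derivative of_nat (a i) * z i ^ (a i - 1) * R) (at (z i))"
    by (auto intro!: derivative_eq_intros)
  then show ?thesis unfolding e1 e2 by (simp add: mult.assoc)
qed

context ratctx begin

lemma weyl_act_lmul_d:
  assumes P: "P \<in> weyl_elems n" and i: "i < n" and h: "h \<in> Cl" and z: "z \<in> U"
  shows "weyl_act n (lmul_d i P) h z = partial i (weyl_act n P h) z"
proof -
  define A where "A = {m. P m \<noteq> 0}"
  define A2 where "A2 = {m. P m \<noteq> 0 \<and> 0 < fst m i}"
  have A: "finite A" using P by (simp add: A_def finite_supp_we)
  have A2: "finite A2" "A2 \<subseteq> A" using A by (auto simp: A2_def A_def intro: finite_subset)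
  define T where "T = phd i ` A \<union> phm i ` A2"
  have T: "finite T" using A A2 by (simp add: T_def)
  define G1 where "G1 m = (if 0 < snd m i then P (fst m, (snd m)(i := snd m i - 1)) else 0) * xmono n (fst m) z * dpow n (snd m) h z" for m
  define G2 where "G2 m = of_nat (fst m i + 1) * P ((fst m)(i := fst m i + 1), snd m) * xmono n (fst m) z * dpow n (snd m) h z" for m
  have "weyl_act n (lmul_d i P) h z = (\<Sum>m\<in>T. lmul_d i P m * xmono n (fst m) z * dpow n (snd m) h z)"
    by (rule weyl_act_superset[OF T]) (use supp_lmul_d in \<open>auto simp: T_def A_def A2_def\<close>)
  also have "\<dots> = (\<Sum>m\<in>T. G1 m + G2 m)"
    by (rule sum.cong) (auto simp: lmul_d_apply G1_def G2_def algebra_simps)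
  also have "\<dots> = sum G1 T + sum G2 T" by (rule sum.distrib)
  finally have L: "weyl_act n (lmul_d i P) h z = sum G1 T + sum G2 T" .
  have S1: "sum G1 T = (\<Sum>m\<in>A. P m * xmono n (fst m) z * dpow n ((snd m)(i := Suc (snd m i))) h z)"
  proof -
    have "sum G1 T = sum (G1 \<circ> phd i) A"
    proof (rule sum_reindex_into[OF T inj_phd])
      show "phd i ` A \<subseteq> T" by (auto simp: T_def)
      fix m :: "expo \<times> expo" assume m: "m \<in> T" "m \<notin> phd i ` A"
      show "G1 m = 0"
      proof (rule ccontr)
        assume "G1 m \<noteq> 0"
        then have c: "0 < snd m i" "P (fst m, (snd m)(i := snd m i - 1)) \<noteq> 0"
          by (auto simp: G1_def split: if_splits)
        have "m = phd i (fst m, (snd m)(i := snd m i - 1))"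
          using c(1) by (auto simp: phd_def fun_eq_iff prod_eq_iff)
        then show False using m(2) c(2) by (auto simp: A_def)
      qed
    qed
    also have "\<dots> = (\<Sum>m\<in>A. P m * xmono n (fst m) z * dpow n ((snd m)(i := Suc (snd m i))) h z)"
    proof (rule sum.cong[OF refl])
      fix m :: "expo \<times> expo"
      have "((snd m)(i := Suc (snd m i)))(i := Suc (snd m i) - 1) = snd m" by (simp add: fun_eq_iff)
      then show "(G1 \<circ> phd i) m = P m * xmono n (fst m) z * dpow n ((snd m)(i := Suc (snd m i))) h z"
        by (simp add: G1_def phd_def)
    qed
    finally show ?thesis .
  qed
  have S2: "sum G2 T = (\<Sum>m\<in>A. of_nat (fst m i) * P m * xmono n ((fst m)(i := fst m i - 1)) z * dpow n (snd m) h z)"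
  proof -
    have inj: "inj_on (phm i) A2" by (rule inj_on_subset[OF inj_phm]) (auto simp: A2_def)
    have "sum G2 T = sum (G2 \<circ> phm i) A2"
    proof (rule sum_reindex_into[OF T inj])
      show "phm i ` A2 \<subseteq> T" by (auto simp: T_def)
      fix m :: "expo \<times> expo" assume m: "m \<in> T" "m \<notin> phm i ` A2"
      show "G2 m = 0"
      proof (rule ccontr)
        assume "G2 m \<noteq> 0"
        then have c: "P ((fst m)(i := fst m i + 1), snd m) \<noteq> 0"
          by (auto simp: G2_def)
        have "m = phm i ((fst m)(i := fst m i + 1), snd m)"
          by (auto simp: phm_def fun_eq_iff prod_eq_iff)
        moreover have "((fst m)(i := fst m i + 1), snd m) \<in> A2" using c by (simp add: A2_def)
        ultimately show False using m(2) by blast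
      qed
    qed
    also have "\<dots> = (\<Sum>m\<in>A2. of_nat (fst m i) * P m * xmono n ((fst m)(i := fst m i - 1)) z * dpow n (snd m) h z)"
    proof (rule sum.cong[OF refl])
      fix m :: "expo \<times> expo" assume "m \<in> A2"
      then have pos: "0 < fst m i" by (simp add: A2_def)
      have e: "((fst m)(i := fst m i - 1))(i := fst m i - 1 + 1) = fst m" using pos by (simp add: fun_eq_iff)
      have e2: "of_nat (fst m i - 1 + 1) = (of_nat (fst m i) :: complex)" using pos by simp
      show "(G2 \<circ> phm i) m = of_nat (fst m i) * P m * xmono n ((fst m)(i := fst m i - 1)) z * dpow n (snd m) h z"
        unfolding G2_def phm_def o_def fst_conv snd_conv fun_upd_same e e2 by simp
    qed
    also have "\<dots> = (\<Sum>m\<in>A. of_nat (fst m i) * P m * xmono n ((fst m)(i := fst m i - 1)) z * dpow n (snd m) h z)"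
      by (rule sum.mono_neutral_left[OF A(1) A2(2)]) (auto simp: A2_def A_def)
    finally show ?thesis .
  qed
  have fn: "(\<lambda>t. weyl_act n P h (z(i:=t))) = (\<lambda>t. \<Sum>m\<in>A. P m * xmono n (fst m) (z(i:=t)) * dpow n (snd m) h (z(i:=t)))"
    by (rule ext, rule weyl_act_superset[OF A]) (simp add: A_def)
  have "((\<lambda>t. \<Sum>m\<in>A. P m * xmono n (fst m) (z(i:=t)) * dpow n (snd m) h (z(i:=t))) has_field_derivative
      (\<Sum>m\<in>A. P m * (of_nat (fst m i) * xmono n ((fst m)(i:=fst m i - 1)) z * dpow n (snd m) h z
          + xmono n (fst m) z * partial i (dpow n (snd m) h) z))) (at (z i))"
  proof (rule DERIV_sum)
    fix m :: "expo \<times> expo"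
    have d1: "((\<lambda>t. xmono n (fst m) (z(i:=t))) has_field_derivative of_nat (fst m i) * xmono n ((fst m)(i:=fst m i - 1)) z) (at (z i))"
      by (rule mono_deriv[OF i])
    have d2: "((\<lambda>t. dpow n (snd m) h (z(i:=t))) has_field_derivative partial i (dpow n (snd m) h) z) (at (z i))"
      by (rule Cl_has_deriv[OF Cl_dpow[OF h] z])
    have "((\<lambda>t. P m * (xmono n (fst m) (z(i:=t)) * dpow n (snd m) h (z(i:=t)))) has_field_derivative
        P m * (of_nat (fst m i) * xmono n ((fst m)(i:=fst m i - 1)) z * dpow n (snd m) h (z(i:= z i))
          + partial i (dpow n (snd m) h) z * xmono n (fst m) (z(i:=z i)))) (at (z i))"
      using DERIV_cmult[OF DERIV_mult[OF d1 d2], of "P m"] by (simp only: fun_upd_triv)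
    then show "((\<lambda>t. P m * xmono n (fst m) (z(i:=t)) * dpow n (snd m) h (z(i:=t))) has_field_derivative
      P m * (of_nat (fst m i) * xmono n ((fst m)(i:=fst m i - 1)) z * dpow n (snd m) h z
          + xmono n (fst m) z * partial i (dpow n (snd m) h) z)) (at (z i))"
      unfolding mult.assoc by (rule DERIV_cong) (simp add: algebra_simps)
  qed
  then have R: "partial i (weyl_act n P h) z = (\<Sum>m\<in>A. P m * (of_nat (fst m i) * xmono n ((fst m)(i:=fst m i - 1)) z * dpow n (snd m) h z
          + xmono n (fst m) z * partial i (dpow n (snd m) h) z))"
    unfolding fn[symmetric] by (rule partial_eqI)
  have dp: "partial i (dpow n (snd m) h) z = dpow n ((snd m)(i := Suc (snd m i))) h z" for m
    using dpow_partial[OF i h, of "snd m"] z unfolding eqU_def by blast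
  show ?thesis
    unfolding L S1 S2 R dp
    by (simp add: sum.distrib[symmetric] algebra_simps)
qed

end

lemma lmul_x_lin: "lmul_x i (\<lambda>m. \<Sum>k\<in>K. c k * Q k m) = (\<lambda>m. \<Sum>k\<in>K. c k * lmul_x i (Q k) m)"
  by (rule ext) (simp add: lmul_x_apply)

lemma lmul_d_lin: "lmul_d i (\<lambda>m. \<Sum>k\<in>K. c k * Q k m) = (\<lambda>m. \<Sum>k\<in>K. c k * lmul_d i (Q k) m)"
  by (rule ext) (simp add: lmul_d_apply sum.distrib sum_distrib_left algebra_simps)

lemma lmul_s_lin: "lmul_s n \<omega> (\<lambda>m. \<Sum>k\<in>K. c k * Q k m) = (\<lambda>m. \<Sum>k\<in>K. c k * lmul_s n \<omega> (Q k) m)"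
  unfolding lmul_s_def lmul_d_lin lmul_x_lin
  by (rule ext) (simp add: sum_distrib_left algebra_simps sum.swap[of _ K])

lemma eval_s_ext:
  assumes "degree p \<le> N"
  shows "eval_s n \<omega> p = (\<lambda>m. \<Sum>k\<le>N. coeff p k * (lmul_s n \<omega> ^^ k) weyl_one m)"
  unfolding eval_s_def
proof (rule ext, rule sum.mono_neutral_left)
  show "finite {..N}" by simp
  show "{..degree p} \<subseteq> {..N}" using assms by auto
  show "\<forall>i\<in>{..N} - {..degree p}. coeff p i * (lmul_s n \<omega> ^^ i) weyl_one m = 0" for m
    by (auto simp: coeff_eq_0)
qed

lemma eval_s_add: "eval_s n \<omega> (p + q) = (\<lambda>m. eval_s n \<omega> p m + eval_s n \<omega> q m)"
proof -
  define N where "N = max (degree p) (degree q)"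
  have "degree (p + q) \<le> N" unfolding N_def by (rule degree_add_le) auto
  then show ?thesis
    using eval_s_ext[of "p+q" N] eval_s_ext[of p N] eval_s_ext[of q N]
    by (simp add: N_def sum.distrib algebra_simps)
qed

lemma eval_s_smult: "eval_s n \<omega> (smult c p) = (\<lambda>m. c * eval_s n \<omega> p m)"
proof -
  have "degree (smult c p) \<le> degree p" by (rule degree_smult_le)
  then show ?thesis
    using eval_s_ext[of "smult c p" "degree p"] eval_s_ext[of p "degree p"]
    by (simp add: sum_distrib_left algebra_simps)
qed

lemma eval_s_zero: "eval_s n \<omega> 0 = (\<lambda>_. 0)"
  by (simp add: eval_s_def)

lemma eval_s_const: "eval_s n \<omega> [:c:] = (\<lambda>m. c * weyl_one m)"
  by (simp add: eval_s_def)

lemma eval_s_pCons0: "eval_s n \<omega> (pCons 0 p) = lmul_s n \<omega> (eval_s n \<omega> p)"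
proof -
  have d: "degree (pCons 0 p) \<le> Suc (degree p)" by (simp add: degree_pCons_le)
  have "eval_s n \<omega> (pCons 0 p) = (\<lambda>m. \<Sum>k\<le>Suc (degree p). coeff (pCons 0 p) k * (lmul_s n \<omega> ^^ k) weyl_one m)"
    by (rule eval_s_ext[OF d])
  also have "\<dots> = (\<lambda>m. \<Sum>k\<le>degree p. coeff p k * lmul_s n \<omega> ((lmul_s n \<omega> ^^ k) weyl_one) m)"
    by (simp only: sum.atMost_Suc_shift coeff_pCons_0 coeff_pCons_Suc funpow.simps o_apply) simp
  also have "\<dots> = lmul_s n \<omega> (eval_s n \<omega> p)"
    unfolding eval_s_def lmul_s_lin ..
  finally show ?thesis .
qed

lemma lideal_sum: "finite K \<Longrightarrow> (\<And>k. k \<in> K \<Longrightarrow> Q k \<in> lideal n S) \<Longrightarrow> (\<lambda>m. \<Sum>k\<in>K. Q k m) \<in> lideal n S"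
proof (induction K rule: finite_induct)
  case empty then show ?case using lideal.zero by simp
next
  case (insert x K)
  then show ?case using lideal.add[of "Q x" n S "\<lambda>m. \<Sum>k\<in>K. Q k m"] by simp
qed

lemma lideal_lmul_s: "Q \<in> lideal n S \<Longrightarrow> lmul_s n \<omega> Q \<in> lideal n S"
  unfolding lmul_s_def
  by (rule lideal_sum) (auto intro: lideal.smult lideal.lx lideal.ld)

definition SB where "SB n \<omega> S = {p. eval_s n \<omega> p \<in> lideal n S}"

lemma SB_mult: "p \<in> SB n \<omega> S \<Longrightarrow> q * p \<in> SB n \<omega> S"
proof (induction q rule: pCons_induct)
  case 0 then show ?case by (simp add: SB_def eval_s_zero lideal.zero)
next
  case (pCons a q)
  have "eval_s n \<omega> (pCons a q * p) = (\<lambda>m. a * eval_s n \<omega> p m + lmul_s n \<omega> (eval_s n \<omega> (q * p)) m)"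
    by (simp add: mult_pCons_left eval_s_add eval_s_smult eval_s_pCons0)
  moreover have "(\<lambda>m. a * eval_s n \<omega> p m) \<in> lideal n S" using pCons by (auto simp: SB_def intro: lideal.smult)
  moreover have "lmul_s n \<omega> (eval_s n \<omega> (q * p)) \<in> lideal n S" using pCons by (auto simp: SB_def intro: lideal_lmul_s)
  ultimately show ?case by (simp add: SB_def lideal.add)
qed

lemma SB_add: "p \<in> SB n \<omega> S \<Longrightarrow> q \<in> SB n \<omega> S \<Longrightarrow> p + q \<in> SB n \<omega> S"
  by (simp add: SB_def eval_s_add lideal.add)

lemma SB_eq:
  assumes B: "B \<in> SB n \<omega> S" "degree B = 1" and one: "weyl_one \<notin> lideal n S"
  shows "SB n \<omega> S = {q * B | q. True}"
proof
  show "{q * B | q. True} \<subseteq> SB n \<omega> S" using SB_mult[OF B(1)] by auto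
  show "SB n \<omega> S \<subseteq> {q * B | q. True}"
  proof
    fix p assume p: "p \<in> SB n \<omega> S"
    have B0: "B \<noteq> 0" using B(2) by auto
    define r where "r = p mod B"
    have pr: "p = (p div B) * B + r" unfolding r_def by simp
    have m: "smult (-1) ((p div B) * B) \<in> SB n \<omega> S"
      using SB_mult[OF B(1), of "smult (-1) (p div B)"] by simp
    have "p + smult (-1) ((p div B) * B) \<in> SB n \<omega> S" by (rule SB_add[OF p m])
    moreover have "r = p - (p div B) * B" by (metis pr add_diff_cancel_left')
    ultimately have rS: "r \<in> SB n \<omega> S" by simp
    have "r = 0"
    proof (rule ccontr)
      assume r0: "r \<noteq> 0"
      then have "degree r < degree B" using degree_mod_less[OF B0, of p] by (simp add: r_def)
      then have "degree r = 0" using B(2) by simp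
      then obtain c where c: "r = [:c:]" by (metis degree_0_id)
      with r0 have c0: "c \<noteq> 0" by simp
      have "(\<lambda>m. c * weyl_one m) \<in> lideal n S" using rS c by (simp add: SB_def eval_s_const)
      then have "(\<lambda>m. (1/c) * (c * weyl_one m)) \<in> lideal n S" by (rule lideal.smult)
      then have "weyl_one \<in> lideal n S" using c0 by simp
      then show False using one by simp
    qed
    then show "p \<in> {q * B | q. True}" using pr by auto
  qed
qed

lemma bfunction_eq:
  assumes B: "eval_s n \<omega> B \<in> init_ideal n \<omega> I" "degree B = 1" "lead_coeff B = 1"
    and one: "weyl_one \<notin> init_ideal n \<omega> I"
  shows "bfunction n \<omega> I = B"
proof -
  define S where "S = {init_form n \<omega> P | P. P \<in> I \<and> P \<noteq> (\<lambda>_. 0)}"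
  have II: "init_ideal n \<omega> I = lideal n S" by (simp add: init_ideal_def S_def)
  have SBe: "{p. eval_s n \<omega> p \<in> init_ideal n \<omega> I} = SB n \<omega> S" by (simp add: SB_def II)
  have eq: "SB n \<omega> S = {q * B | q. True}"
    by (rule SB_eq) (use B one in \<open>auto simp: SB_def II\<close>)
  show ?thesis
    unfolding bfunction_def SBe
  proof (rule the_equality)
    show "(B = 0 \<or> lead_coeff B = 1) \<and> SB n \<omega> S = {q * B |q. True}" using B(3) eq by simp
  next
    fix b assume b: "(b = 0 \<or> lead_coeff b = 1) \<and> SB n \<omega> S = {q * b |q. True}"
    have B0: "B \<noteq> 0" using B(2) by auto
    have "B \<in> {q * b |q. True}" using b eq by auto
    then obtain q where q: "B = q * b" by auto
    have "b \<in> {q * B |q. True}" using b eq by (metis (mono_tags, lifting) mem_Collect_eq mult_1)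
    then obtain q' where q': "b = q' * B" by auto
    have b0: "b \<noteq> 0" using q B0 by auto
    have q0: "q \<noteq> 0" "q' \<noteq> 0" using q q' B0 b0 by auto
    have "B = (q * q') * B" using q q' by (simp add: mult.assoc)
    then have "q * q' = 1" using B0 by (metis mult_cancel_right mult_1)
    then have "degree q + degree q' = 0" using degree_mult_eq[OF q0] by simp
    then have "degree q = 0" by simp
    then obtain c where c: "q = [:c:]" by (metis degree_0_id)
    have lb: "lead_coeff b = 1" using b b0 by auto
    have "lead_coeff B = c * lead_coeff b" using q c by (simp add: lead_coeff_mult)
    then have "c = 1" using B(3) lb by simp
    then show "b = B" using q c by simp
  qed
qed

lemma digits_bound: "(\<forall>j<n. a j < (K::nat)) \<Longrightarrow> (\<Sum>j<n. a j * K ^ j) < K ^ n"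
proof (induction n)
  case 0 then show ?case by simp
next
  case (Suc n)
  have h: "(\<Sum>j<n. a j * K ^ j) < K ^ n" using Suc.IH Suc.prems by simp
  have h2: "a n < K" using Suc.prems by simp
  then have "a n + 1 \<le> K" by simp
  then have "(a n + 1) * K ^ n \<le> K * K ^ n" by (rule mult_right_mono) simp
  then have "(\<Sum>j<n. a j * K ^ j) + a n * K ^ n < K * K ^ n" using h by (simp add: algebra_simps)
  then show ?case by (simp only: sum.lessThan_Suc power_Suc)
qed

lemma digits_inj:
  "(\<forall>j<n. a j < (K::nat)) \<Longrightarrow> (\<forall>j<n. b j < K) \<Longrightarrow> (\<Sum>j<n. a j * K ^ j) = (\<Sum>j<n. b j * K ^ j) \<Longrightarrow> \<forall>j<n. a j = b j"
proof (induction n)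
  case 0 then show ?case by simp
next
  case (Suc n)
  define sa where "sa = (\<Sum>j<n. a j * K ^ j)"
  define sb where "sb = (\<Sum>j<n. b j * K ^ j)"
  have pa: "\<forall>j<n. a j < K" and pb: "\<forall>j<n. b j < K" using Suc.prems(1,2) by simp_all
  have ba: "sa < K ^ n" "sb < K ^ n" unfolding sa_def sb_def using pa pb by (auto intro: digits_bound)
  have eq: "sa + a n * K ^ n = sb + b n * K ^ n" using Suc.prems(3) by (simp add: sa_def sb_def)
  have Kn: "K ^ n \<noteq> 0" using ba(1) by linarith
  have "(sa + a n * K ^ n) div K ^ n = a n + sa div K ^ n" using Kn by simp
  also have "sa div K ^ n = 0" using ba(1) by (rule div_less)
  finally have d1: "(sa + a n * K ^ n) div K ^ n = a n" by simp
  have "(sb + b n * K ^ n) div K ^ n = b n + sb div K ^ n" using Kn by simp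
  also have "sb div K ^ n = 0" using ba(2) by (rule div_less)
  finally have d2: "(sb + b n * K ^ n) div K ^ n = b n" by simp
  have an: "a n = b n" using eq d1 d2 by simp
  then have "sa = sb" using eq by simp
  then have IH: "\<forall>j<n. a j = b j" using Suc.IH[OF pa pb] by (simp add: sa_def sb_def)
  show ?case
  proof (intro allI impI)
    fix j assume "j < Suc n"
    then show "a j = b j" using IH an by (cases "j = n") auto
  qed
qed

lemma mpoly_nonvanishing:
  assumes f: "f \<in> mpolys n" and nz: "f \<noteq> (\<lambda>_. 0)"
  shows "\<exists>z. mpoly_eval n f z \<noteq> 0"
proof -
  define S where "S = {a. f a \<noteq> 0}"
  have S: "finite S" using f by (simp add: mpolys_def S_def)
  have Sz: "\<And>a j. a \<in> S \<Longrightarrow> n \<le> j \<Longrightarrow> a j = 0" using f by (auto simp: mpolys_def S_def)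
  obtain a0 where a0: "a0 \<in> S" using nz by (auto simp: S_def fun_eq_iff)
  define K where "K = Suc (\<Sum>a\<in>S. \<Sum>j<n. a j)"
  have aK: "a j < K" if "a \<in> S" "j < n" for a j
  proof -
    have "a j \<le> (\<Sum>j<n. a j)" using that by (intro member_le_sum) auto
    also have "\<dots> \<le> (\<Sum>a\<in>S. \<Sum>j<n. a j)" using that S by (intro member_le_sum) auto
    finally show ?thesis by (simp add: K_def)
  qed
  define enc where "enc a = (\<Sum>j<n. a j * K ^ j)" for a
  have inj: "inj_on enc S"
  proof (rule inj_onI)
    fix a b assume ab: "a \<in> S" "b \<in> S" "enc a = enc b"
    have "\<forall>j<n. a j = b j" using digits_inj[of n a K b] ab aK by (simp add: enc_def)
    then show "a = b"
    proof (intro ext)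
      fix j show "a j = b j"
        using \<open>\<forall>j<n. a j = b j\<close> Sz[OF ab(1), of j] Sz[OF ab(2), of j] by (cases "j < n") auto
    qed
  qed
  define Q where "Q = (\<Sum>a\<in>S. monom (f a) (enc a))"
  have ev: "mpoly_eval n f (\<lambda>j. t ^ (K ^ j)) = poly Q t" for t
  proof -
    have "(\<Prod>i<n. (t ^ (K ^ i)) ^ a i) = t ^ enc a" for a
    proof -
      have "(\<Prod>i<n. (t ^ (K ^ i)) ^ a i) = (\<Prod>i<n. t ^ (a i * K ^ i))"
        by (rule prod.cong[OF refl]) (metis power_mult mult.commute)
      also have "\<dots> = t ^ enc a" unfolding enc_def by (rule power_sum[symmetric])
      finally show ?thesis .
    qed
    then show ?thesis by (simp add: mpoly_eval_def Q_def poly_sum poly_monom S_def)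
  qed
  have "coeff Q (enc a0) = (\<Sum>a\<in>S. if enc a = enc a0 then f a else 0)"
    by (simp add: Q_def coeff_sum coeff_monom)
  also have "\<dots> = (\<Sum>a\<in>S. if a = a0 then f a else 0)"
    by (rule sum.cong[OF refl]) (use inj a0 in \<open>auto dest: inj_onD\<close>)
  also have "\<dots> = f a0" using S a0 by simp
  finally have "coeff Q (enc a0) \<noteq> 0" using a0 by (simp add: S_def)
  then have Q0: "Q \<noteq> 0" by auto
  have "\<exists>t. poly Q t \<noteq> 0"
  proof (rule ccontr)
    assume "\<not> (\<exists>t. poly Q t \<noteq> 0)"
    then have "{t. poly Q t = 0} = UNIV" by auto
    then show False using poly_roots_finite[OF Q0] infinite_UNIV_char_0[where 'a=complex] by simp
  qed
  then obtain t where "poly Q t \<noteq> 0" by blast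
  then show ?thesis using ev[of t] by (intro exI[of _ "\<lambda>j. t ^ (K ^ j)"]) simp
qed

lemma homog_deg:
  assumes f: "f \<in> mpolys n" and nz: "f \<noteq> (\<lambda>_. 0)" and h: "homogeneous n f" and a: "f a \<noteq> 0"
  shows "expo_deg n a = total_degree n f"
proof -
  have "expo_deg n ` {a. f a \<noteq> 0} = {expo_deg n a}"
  proof
    show "expo_deg n ` {a. f a \<noteq> 0} \<subseteq> {expo_deg n a}"
      using a h unfolding homogeneous_def by blast
    show "{expo_deg n a} \<subseteq> expo_deg n ` {a. f a \<noteq> 0}" using a by blast
  qed
  then show ?thesis unfolding total_degree_def by simp
qed

lemma xmono_scal: "xmono n a (scal t w) = t ^ expo_deg n a * xmono n a w"
proof -
  have "xmono n a (scal t w) = (\<Prod>j<n. t ^ a j * w j ^ a j)"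
    unfolding xmono_def scal_def by (simp only: power_mult_distrib)
  also have "\<dots> = (\<Prod>j<n. t ^ a j) * (\<Prod>j<n. w j ^ a j)" by (rule prod.distrib)
  also have "\<dots> = t ^ expo_deg n a * xmono n a w"
    unfolding xmono_def expo_deg_def by (simp only: power_sum)
  finally show ?thesis .
qed

lemma mpoly_eval_xmono: "mpoly_eval n f w = (\<Sum>a\<in>{a. f a \<noteq> 0}. f a * xmono n a w)"
  unfolding mpoly_eval_def xmono_def ..

lemma mpoly_hom:
  assumes f: "f \<in> mpolys n" and nz: "f \<noteq> (\<lambda>_. 0)" and h: "homogeneous n f"
  shows "mpoly_eval n f (scal t w) = t ^ total_degree n f * mpoly_eval n f w"
proof -
  have "mpoly_eval n f (scal t w) = (\<Sum>a\<in>{a. f a \<noteq> 0}. t ^ total_degree n f * (f a * xmono n a w))"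
    unfolding mpoly_eval_xmono xmono_scal
    by (rule sum.cong[OF refl]) (simp add: homog_deg[OF f nz h])
  also have "\<dots> = t ^ total_degree n f * mpoly_eval n f w"
    unfolding mpoly_eval_xmono by (rule sum_distrib_left[symmetric])
  finally show ?thesis .
qed

lemma weight1: "weight n (\<lambda>_. 1) m = real (expo_deg n (snd m)) - real (expo_deg n (fst m))"
  by (simp add: weight_def expo_deg_def)

lemma we_sum: "finite K \<Longrightarrow> (\<And>k. k \<in> K \<Longrightarrow> Q k \<in> weyl_elems n) \<Longrightarrow> (\<lambda>m. \<Sum>k\<in>K. Q k m) \<in> weyl_elems n"
proof (induction K rule: finite_induct)
  case empty then show ?case using we_zero by simp
next
  case (insert x K)
  then show ?case using we_add[of "Q x" n "\<lambda>m. \<Sum>k\<in>K. Q k m"] by simp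
qed

lemma weyl_act_sum: "finite K \<Longrightarrow> (\<And>k. k \<in> K \<Longrightarrow> Q k \<in> weyl_elems n) \<Longrightarrow>
   weyl_act n (\<lambda>m. \<Sum>k\<in>K. Q k m) h z = (\<Sum>k\<in>K. weyl_act n (Q k) h z)"
proof (induction K rule: finite_induct)
  case empty then show ?case using weyl_act_zero by simp
next
  case (insert x K)
  have "weyl_act n (\<lambda>m. \<Sum>k\<in>insert x K. Q k m) h z = weyl_act n (\<lambda>m. Q x m + (\<Sum>k\<in>K. Q k m)) h z"
    using insert by simp
  also have "\<dots> = weyl_act n (Q x) h z + weyl_act n (\<lambda>m. \<Sum>k\<in>K. Q k m) h z"
  proof (rule weyl_act_add)
    show "Q x \<in> weyl_elems n" using insert.prems by simp
    show "(\<lambda>m. \<Sum>k\<in>K. Q k m) \<in> weyl_elems n" by (rule we_sum[OF insert.hyps(1)]) (use insert.prems in auto)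
  qed
  finally show ?case using insert by simp
qed

lemma we_one: "weyl_one \<in> weyl_elems n"
proof (rule we_intro)
  have "{m. weyl_one m \<noteq> 0} \<subseteq> {((\<lambda>_. 0), (\<lambda>_. 0))}" by (auto simp: weyl_one_def split: if_splits)
  then show "finite {m. weyl_one m \<noteq> (0::complex)}" by (rule finite_subset) simp
next
  fix a b j assume "weyl_one (a, b) \<noteq> 0"
  then show "a j = 0 \<and> b j = 0" by (auto simp: weyl_one_def split: if_splits)
qed

lemma Gf_zero: "Gf (\<lambda>_. 0) L h = h"
  by (induction L) auto

lemma weyl_act_one: "weyl_act n weyl_one h = h"
proof (rule ext)
  fix z
  have "weyl_act n weyl_one h z = (\<Sum>m\<in>{((\<lambda>_. 0), (\<lambda>_. 0))}. weyl_one m * xmono n (fst m) z * dpow n (snd m) h z)"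
    by (rule weyl_act_superset) (auto simp: weyl_one_def split: if_splits)
  also have "\<dots> = h z" by (simp add: weyl_one_def xmono_def dpow_Gf Gf_zero)
  finally show "weyl_act n weyl_one h z = h z" .
qed

definition ev :: "nat \<Rightarrow> expo" where "ev i = (\<lambda>_. 0)(i := 1)"

lemma ev_char: "(0 < a i \<and> a(i := a i - 1) = (\<lambda>_. 0)) \<longleftrightarrow> a = ev i"
proof
  assume h: "0 < a i \<and> a(i := a i - 1) = (\<lambda>_. 0)"
  show "a = ev i"
  proof (rule ext)
    fix j show "a j = ev i j"
    proof (cases "j = i")
      case True
      have "a i - 1 = 0" using fun_cong[OF conjunct2[OF h], of i] by simp
      then show ?thesis using h True by (simp add: ev_def)
    next
      case False then show ?thesis using fun_cong[OF conjunct2[OF h], of j] by (simp add: ev_def)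
    qed
  qed
next
  assume "a = ev i" then show "0 < a i \<and> a(i := a i - 1) = (\<lambda>_. 0)" by (simp add: ev_def fun_eq_iff)
qed

lemma upd_Suc_ne0: "a(i := Suc k) \<noteq> (\<lambda>_. 0)"
  by (auto simp: fun_eq_iff dest: spec[of _ i])

lemma lxd_one: "lmul_x i (lmul_d i weyl_one) m = (if fst m = ev i \<and> snd m = ev i then 1 else 0)"
proof -
  obtain a b where m: "m = (a, b)" by fastforce
  have h1: "weyl_one (a'(i := a' i + 1), b') = 0" for a' b'
    using upd_Suc_ne0[of a' i "a' i"] by (simp add: weyl_one_def)
  have h2: "lmul_d i weyl_one (a', b) = (if 0 < b i \<and> a' = (\<lambda>_. 0) \<and> b(i := b i - 1) = (\<lambda>_. 0) then 1 else 0)" for a'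
    by (simp only: lmul_d_def split_conv h1 mult_zero_right add_0_right) (simp add: weyl_one_def)
  have "lmul_x i (lmul_d i weyl_one) (a, b) = (if 0 < a i then lmul_d i weyl_one (a(i := a i - 1), b) else 0)"
    by (simp add: lmul_x_def)
  also have "\<dots> = (if (0 < a i \<and> a(i := a i - 1) = (\<lambda>_. 0)) \<and> (0 < b i \<and> b(i := b i - 1) = (\<lambda>_. 0)) then 1 else 0)"
    unfolding h2 by auto
  also have "\<dots> = (if a = ev i \<and> b = ev i then 1 else 0)"
    unfolding ev_char ..
  finally show ?thesis using m by simp
qed

lemma ev_inj: assumes "ev i = ev j" shows "i = j"
proof (rule ccontr)
  assume "i \<noteq> j"
  from fun_cong[OF assms, of i] this show False by (simp add: ev_def)
qed

lemma expo_deg_ev: "i < n \<Longrightarrow> expo_deg n (ev i) = 1"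
proof -
  assume i: "i < n"
  have "(\<Sum>j<n. ev i j) = (\<Sum>j<n. if j = i then 1 else 0)" by (rule sum.cong) (auto simp: ev_def)
  then show ?thesis using i by (simp add: expo_deg_def)
qed

locale mainctx =
  fixes n :: nat and f :: cpoly
  assumes n1: "1 \<le> n" and fin: "f \<in> mpolys n" and nz: "f \<noteq> (\<lambda>_. 0)" and hom: "homogeneous n f"
begin

sublocale homctx "mpoly_eval n f" "total_degree n f"
proof unfold_locales
  show "mpoly_eval n f \<in> pf" by (rule pf_mpoly_eval[OF fin])
  show "mpoly_eval n f (scal t w) = t ^ total_degree n f * mpoly_eval n f w" for t w
    by (rule mpoly_hom[OF fin nz hom])
qed

lemma Ann_iff: "P \<in> Ann_inv n f \<longleftrightarrow> P \<in> weyl_elems n \<and> (\<forall>z\<in>U. weyl_act n P g z = 0)"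
  unfolding Ann_inv_def U_def g_def by auto

lemma lideal_Ann:
  assumes S: "S \<subseteq> Ann_inv n f"
  shows "lideal n S \<subseteq> Ann_inv n f"
proof
  fix P assume "P \<in> lideal n S"
  then show "P \<in> Ann_inv n f"
  proof induction
    case (gen P) then show ?case using S by blast
  next
    case zero then show ?case by (simp add: Ann_iff we_zero weyl_act_zero)
  next
    case (add P Q) then show ?case by (simp add: Ann_iff we_add weyl_act_add)
  next
    case (smult P c) then show ?case by (simp add: Ann_iff we_smult weyl_act_smult)
  next
    case (lx P i) then show ?case by (simp add: Ann_iff we_lmul_x weyl_act_lmul_x)
  next
    case (ld P i)
    have PW: "P \<in> weyl_elems n" and Pz: "\<forall>z\<in>U. weyl_act n P g z = 0" using ld.IH by (auto simp: Ann_iff)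
    have "eqU (weyl_act n P g) (\<lambda>_. 0)" using Pz by (simp add: eqU_def)
    then have e: "eqU (partial i (weyl_act n P g)) (\<lambda>_. 0)"
      using partial_local[of "weyl_act n P g" "\<lambda>_. 0" i] by simp
    have "\<forall>z\<in>U. weyl_act n (lmul_d i P) g z = 0"
    proof
      fix z assume z: "z \<in> U"
      have "weyl_act n (lmul_d i P) g z = partial i (weyl_act n P g) z"
        by (rule weyl_act_lmul_d[OF PW ld.hyps(2) g_Cl z])
      then show "weyl_act n (lmul_d i P) g z = 0" using e z by (simp add: eqU_def)
    qed
    then show ?case using we_lmul_d[OF PW ld.hyps(2)] by (simp add: Ann_iff)
  qed
qed

lemma init_Ann:
  assumes P: "P \<in> Ann_inv n f" and P0: "P \<noteq> (\<lambda>_. 0)"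
  shows "init_form n (\<lambda>_. 1) P \<in> Ann_inv n f"
proof -
  define A where "A = {m. P m \<noteq> 0}"
  have PW: "P \<in> weyl_elems n" and Pz: "\<forall>z\<in>U. weyl_act n P g z = 0" using P by (auto simp: Ann_iff)
  have A: "finite A" using PW by (simp add: A_def finite_supp_we)
  have Ane: "A \<noteq> {}" using P0 by (auto simp: A_def fun_eq_iff)
  define wt where "wt m = weight n (\<lambda>_. 1) m" for m
  define M where "M = Max (wt ` A)"
  have "M \<in> wt ` A" unfolding M_def using A Ane by (intro Max_in) auto
  then obtain m0 where m0: "m0 \<in> A" "wt m0 = M" by auto
  define N where "N = (\<Sum>m\<in>A. expo_deg n (snd m))"
  have NB: "expo_deg n (snd m) \<le> N" if "m \<in> A" for m
    unfolding N_def using A that by (intro member_le_sum) auto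
  define e where "e m = expo_deg n (fst m) + N - expo_deg n (snd m)" for m
  have ewt: "real (e m) = real N - wt m" if "m \<in> A" for m
    using NB[OF that] by (simp add: e_def wt_def weight1 of_nat_diff)
  have e_iff: "e m = e m0 \<longleftrightarrow> wt m = M" if "m \<in> A" for m
  proof -
    have "e m = e m0 \<longleftrightarrow> real (e m) = real (e m0)" by simp
    also have "\<dots> \<longleftrightarrow> wt m = wt m0" using ewt[OF that] ewt[OF m0(1)] by simp
    finally show ?thesis using m0(2) by simp
  qed
  have IF: "init_form n (\<lambda>_. 1) P = (\<lambda>m. if wt m = M then P m else 0)"
    unfolding init_form_def Let_def wt_def M_def A_def ..
  have IW: "init_form n (\<lambda>_. 1) P \<in> weyl_elems n"
  proof (rule we_intro)
    have "{m. init_form n (\<lambda>_. 1) P m \<noteq> 0} \<subseteq> A" unfolding IF A_def by auto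
    then show "finite {m. init_form n (\<lambda>_. 1) P m \<noteq> 0}" using A by (rule finite_subset)
  next
    fix a b j assume "init_form n (\<lambda>_. 1) P (a, b) \<noteq> 0" "n \<le> j"
    then show "a j = 0 \<and> b j = 0" using we_D[OF PW, of a b j] unfolding IF by (auto split: if_splits)
  qed
  have "\<forall>z\<in>U. weyl_act n (init_form n (\<lambda>_. 1) P) g z = 0"
  proof
    fix z assume z: "z \<in> U"
    define c where "c m = P m * xmono n (fst m) z * dpow n (snd m) g z" for m
    define Q where "Q = (\<Sum>m\<in>A. monom (c m) (e m))"
    have polyQ: "poly Q t = 0" if t: "t \<noteq> 0" for t
    proof -
      have hd: "t ^ (total_degree n f + expo_deg n b) * dpow n b g (scal t z) = dpow n b g z" for b
        using homk_dpow[OF g_Cl g_hom, of b] z t unfolding homk_def expo_deg_def by blast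
      have trm: "c m * t ^ e m = t ^ (total_degree n f + N) * (P m * xmono n (fst m) (scal t z) * dpow n (snd m) g (scal t z))"
        if m: "m \<in> A" for m
      proof -
        have ex: "total_degree n f + N + expo_deg n (fst m) = e m + (total_degree n f + expo_deg n (snd m))"
          using NB[OF m] by (simp add: e_def)
        have "t ^ (total_degree n f + N) * (P m * xmono n (fst m) (scal t z) * dpow n (snd m) g (scal t z))
            = P m * xmono n (fst m) z * t ^ (total_degree n f + N + expo_deg n (fst m)) * dpow n (snd m) g (scal t z)"
          by (simp add: xmono_scal power_add algebra_simps)
        also have "\<dots> = P m * xmono n (fst m) z * t ^ e m * (t ^ (total_degree n f + expo_deg n (snd m)) * dpow n (snd m) g (scal t z))"
          unfolding ex by (simp add: power_add algebra_simps)
        also have "\<dots> = c m * t ^ e m" unfolding hd c_def by simp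
        finally show ?thesis by simp
      qed
      have "poly Q t = (\<Sum>m\<in>A. c m * t ^ e m)" by (simp add: Q_def poly_sum poly_monom)
      also have "\<dots> = (\<Sum>m\<in>A. t ^ (total_degree n f + N) * (P m * xmono n (fst m) (scal t z) * dpow n (snd m) g (scal t z)))"
        by (rule sum.cong[OF refl]) (rule trm)
      also have "\<dots> = t ^ (total_degree n f + N) * weyl_act n P g (scal t z)"
        by (simp add: sum_distrib_left[symmetric] weyl_act_superset[OF A] A_def)
      also have "\<dots> = 0" using Pz U_scal[OF z t] by simp
      finally show ?thesis .
    qed
    have Q0: "Q = 0"
    proof (rule ccontr)
      assume "Q \<noteq> 0"
      then have fin: "finite {t. poly Q t = 0}" by (rule poly_roots_finite)
      have "UNIV - {0} \<subseteq> {t. poly Q t = 0}" using polyQ by auto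
      then have "finite (UNIV - {0::complex})" using fin by (rule finite_subset)
      then have "finite (UNIV :: complex set)" by simp
      then show False using infinite_UNIV_char_0[where 'a=complex] by simp
    qed
    have "weyl_act n (init_form n (\<lambda>_. 1) P) g z = (\<Sum>m\<in>A. init_form n (\<lambda>_. 1) P m * xmono n (fst m) z * dpow n (snd m) g z)"
      by (rule weyl_act_superset[OF A]) (auto simp: IF A_def)
    also have "\<dots> = (\<Sum>m\<in>A. if e m = e m0 then c m else 0)"
      by (rule sum.cong[OF refl]) (simp add: IF e_iff c_def)
    also have "\<dots> = coeff Q (e m0)" by (simp add: Q_def coeff_sum coeff_monom)
    also have "\<dots> = 0" using Q0 by simp
    finally show "weyl_act n (init_form n (\<lambda>_. 1) P) g z = 0" .
  qed
  then show ?thesis using IW by (simp add: Ann_iff)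
qed

lemma init_ideal_Ann: "init_ideal n (\<lambda>_. 1) (Ann_inv n f) \<subseteq> Ann_inv n f"
  unfolding init_ideal_def by (rule lideal_Ann) (auto intro: init_Ann)

lemma one_notin: "weyl_one \<notin> Ann_inv n f"
proof
  assume "weyl_one \<in> Ann_inv n f"
  then have h: "\<forall>z\<in>U. g z = 0" by (simp add: Ann_iff weyl_act_one)
  obtain z0 where z0: "mpoly_eval n f z0 \<noteq> 0" using mpoly_nonvanishing[OF fin nz] by blast
  then have "z0 \<in> U" by (simp add: U_def)
  then have "g z0 = 0" using h by blast
  then show False using z0 by (simp add: g_def)
qed

end

lemma E_expl: "eval_s n (\<lambda>_. 1) [:c, 1:] = (\<lambda>m. c * weyl_one m + (\<Sum>i<n. lmul_x i (lmul_d i weyl_one) m))"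
  by (rule ext) (simp add: eval_s_def lmul_s_def)

lemma E_we: "eval_s n (\<lambda>_. 1) [:c, 1:] \<in> weyl_elems n"
  unfolding E_expl
  by (intro we_add we_smult we_sum we_one we_lmul_x we_lmul_d) auto

lemma E_expl2: "eval_s n (\<lambda>_. 1) [:c, 1:] m = c * weyl_one m + (\<Sum>i<n. if fst m = ev i \<and> snd m = ev i then 1 else 0)"
  unfolding E_expl lxd_one ..

context mainctx begin

lemma partial_F:
  assumes i: "i < n"
  shows "partial i (mpoly_eval n f) z = (\<Sum>a\<in>{a. f a \<noteq> 0}. f a * (of_nat (a i) * xmono n (a(i := a i - 1)) z))"
proof (rule partial_eqI)
  have fn: "(\<lambda>t. mpoly_eval n f (z(i:=t))) = (\<lambda>t. \<Sum>a\<in>{a. f a \<noteq> 0}. f a * xmono n a (z(i:=t)))"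
    by (rule ext) (rule mpoly_eval_xmono)
  show "((\<lambda>t. mpoly_eval n f (z(i:=t))) has_field_derivative
      (\<Sum>a\<in>{a. f a \<noteq> 0}. f a * (of_nat (a i) * xmono n (a(i := a i - 1)) z))) (at (z i))"
    unfolding fn by (intro DERIV_sum DERIV_cmult mono_deriv[OF i])
qed

lemma zi_mono: "i < n \<Longrightarrow> z i * (of_nat (a i) * xmono n (a(i := a i - 1)) z) = of_nat (a i) * xmono n a z"
proof (cases "a i = 0")
  case True then show ?thesis by simp
next
  case False
  assume i: "i < n"
  have "(a(i := a i - 1))(i := Suc ((a(i := a i - 1)) i)) = a" using False by (simp add: fun_eq_iff)
  then have "xmono n a z = z i * xmono n (a(i := a i - 1)) z"
    using mono_Suc[OF i, of "a(i := a i - 1)" z] by simp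
  then show ?thesis by simp
qed

lemma euler: "(\<Sum>i<n. z i * partial i (mpoly_eval n f) z) = of_nat (total_degree n f) * mpoly_eval n f z"
proof -
  define S where "S = {a. f a \<noteq> 0}"
  have "(\<Sum>i<n. z i * partial i (mpoly_eval n f) z) = (\<Sum>i<n. \<Sum>a\<in>S. f a * (of_nat (a i) * xmono n a z))"
  proof (rule sum.cong[OF refl])
    fix i assume "i \<in> {..<n}"
    then have i: "i < n" by simp
    show "z i * partial i (mpoly_eval n f) z = (\<Sum>a\<in>S. f a * (of_nat (a i) * xmono n a z))"
      unfolding partial_F[OF i] sum_distrib_left S_def
      by (rule sum.cong[OF refl]) (subst mult.left_commute, simp only: zi_mono[OF i])
  qed
  also have "\<dots> = (\<Sum>a\<in>S. \<Sum>i<n. f a * (of_nat (a i) * xmono n a z))" by (rule sum.swap)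
  also have "\<dots> = (\<Sum>a\<in>S. f a * xmono n a z * of_nat (expo_deg n a))"
    by (rule sum.cong[OF refl]) (simp add: expo_deg_def sum_distrib_left sum_distrib_right algebra_simps)
  also have "\<dots> = (\<Sum>a\<in>S. of_nat (total_degree n f) * (f a * xmono n a z))"
    by (rule sum.cong[OF refl]) (simp add: S_def homog_deg[OF fin nz hom])
  also have "\<dots> = of_nat (total_degree n f) * mpoly_eval n f z"
    by (simp add: sum_distrib_left[symmetric] mpoly_eval_xmono S_def)
  finally show ?thesis .
qed

lemma partial_g: "z \<in> U \<Longrightarrow> partial i g z = - partial i (mpoly_eval n f) z / (mpoly_eval n f z) ^ 2"
proof -
  assume z: "z \<in> U"
  have "\<forall>w\<in>U. g w = (\<lambda>_. 1) w / mpoly_eval n f w ^ 1" by (simp add: g_def)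
  from Cl_partial_eq[OF pf_const this, of i] z show ?thesis
    by (simp add: eqU_def power2_eq_square)
qed

lemma E_Ann: "eval_s n (\<lambda>_. 1) [:of_nat (total_degree n f), 1:] \<in> Ann_inv n f"
proof -
  define D where "D = total_degree n f"
  have ones: "\<And>i. i < n \<Longrightarrow> lmul_x i (lmul_d i weyl_one) \<in> weyl_elems n"
    by (intro we_lmul_x we_lmul_d we_one)
  have "\<forall>z\<in>U. weyl_act n (eval_s n (\<lambda>_. 1) [:of_nat D, 1:]) g z = 0"
  proof
    fix z assume z: "z \<in> U"
    have Fz: "mpoly_eval n f z \<noteq> 0" using z by (simp add: U_def)
    have "weyl_act n (eval_s n (\<lambda>_. 1) [:of_nat D, 1:]) g z
        = weyl_act n (\<lambda>m. of_nat D * weyl_one m) g z + weyl_act n (\<lambda>m. \<Sum>i<n. lmul_x i (lmul_d i weyl_one) m) g z"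
      unfolding E_expl by (rule weyl_act_add) (auto intro: we_smult we_one we_sum ones)
    also have "\<dots> = of_nat D * g z + (\<Sum>i<n. z i * partial i g z)"
    proof -
      have a: "weyl_act n (\<lambda>m. of_nat D * weyl_one m) g z = of_nat D * g z"
        using weyl_act_smult[OF we_one] weyl_act_one by simp
      have b: "weyl_act n (\<lambda>m. \<Sum>i<n. lmul_x i (lmul_d i weyl_one) m) g z = (\<Sum>i<n. weyl_act n (lmul_x i (lmul_d i weyl_one)) g z)"
        by (rule weyl_act_sum) (auto intro: ones)
      have c: "weyl_act n (lmul_x i (lmul_d i weyl_one)) g z = z i * partial i g z" if i: "i < n" for i
      proof -
        have "weyl_act n (lmul_x i (lmul_d i weyl_one)) g z = z i * weyl_act n (lmul_d i weyl_one) g z"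
          by (rule weyl_act_lmul_x[OF we_lmul_d[OF we_one i] i])
        also have "weyl_act n (lmul_d i weyl_one) g z = partial i (weyl_act n weyl_one g) z"
          by (rule weyl_act_lmul_d[OF we_one i g_Cl z])
        finally show ?thesis by (simp add: weyl_act_one)
      qed
      show ?thesis using a b c by simp
    qed
    also have "\<dots> = of_nat D / mpoly_eval n f z - (\<Sum>i<n. z i * partial i (mpoly_eval n f) z) / (mpoly_eval n f z)^2"
    proof -
      have "(\<Sum>i<n. z i * partial i g z) = (\<Sum>i<n. - (z i * partial i (mpoly_eval n f) z / (mpoly_eval n f z)^2))"
        by (rule sum.cong[OF refl]) (simp add: partial_g[OF z])
      also have "\<dots> = - ((\<Sum>i<n. z i * partial i (mpoly_eval n f) z) / (mpoly_eval n f z)^2)"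
        by (simp add: sum_negf sum_divide_distrib)
      finally show ?thesis by (simp add: g_def)
    qed
    also have "\<dots> = 0" using Fz by (simp add: euler D_def power2_eq_square)
    finally show "weyl_act n (eval_s n (\<lambda>_. 1) [:of_nat D, 1:]) g z = 0" .
  qed
  then show ?thesis using E_we by (simp add: Ann_iff D_def)
qed

end

lemma E_diag: "eval_s n (\<lambda>_. 1) [:c, 1:] m \<noteq> 0 \<Longrightarrow> fst m = snd m"
proof (rule ccontr)
  assume h: "eval_s n (\<lambda>_. 1) [:c, 1:] m \<noteq> 0" and ne: "fst m \<noteq> snd m"
  have "weyl_one m = 0" using ne by (cases m) (auto simp: weyl_one_def)
  moreover have "(\<Sum>i<n. if fst m = ev i \<and> snd m = ev i then 1 else (0::complex)) = 0"
    using ne by (intro sum.neutral) auto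
  ultimately show False using h by (simp add: E_expl2)
qed

lemma E_nz: "0 < n \<Longrightarrow> eval_s n (\<lambda>_. 1) [:c, 1:] (ev 0, ev 0) = 1"
proof -
  assume n: "0 < n"
  have "ev 0 \<noteq> (\<lambda>_. 0)" by (auto simp: ev_def fun_eq_iff)
  then have o: "weyl_one (ev 0, ev 0) = 0" by (simp add: weyl_one_def)
  have "(\<Sum>i<n. if ev 0 = ev i \<and> ev 0 = ev i then 1 else (0::complex)) = (\<Sum>i<n. if i = 0 then 1 else 0)"
    by (rule sum.cong[OF refl]) (auto dest: ev_inj)
  also have "\<dots> = 1" using n by simp
  finally show ?thesis by (simp add: E_expl2 o)
qed

lemma E_init: "0 < n \<Longrightarrow> init_form n (\<lambda>_. 1) (eval_s n (\<lambda>_. 1) [:c, 1:]) = eval_s n (\<lambda>_. 1) [:c, 1:]"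
proof -
  assume n: "0 < n"
  define E where "E = eval_s n (\<lambda>_. 1) [:c, 1:]"
  have w0: "weight n (\<lambda>_. 1) m = 0" if "E m \<noteq> 0" for m
    using E_diag[of n c m] that by (simp add: E_def weight1)
  have ne: "(ev 0, ev 0) \<in> {m. E m \<noteq> 0}" using E_nz[OF n] by (simp add: E_def)
  have "weight n (\<lambda>_. 1) ` {m. E m \<noteq> 0} = {0}" using w0 ne by auto
  then have M: "Max (weight n (\<lambda>_. 1) ` {m. E m \<noteq> 0}) = 0" by simp
  have "init_form n (\<lambda>_. 1) E = E"
    unfolding init_form_def Let_def M by (rule ext) (use w0 in auto)
  then show ?thesis by (simp add: E_def)
qed

theorem mainTheorem10:
  fixes n d :: nat and f :: "(nat \<Rightarrow> nat) \<Rightarrow> complex"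
  assumes "1 \<le> n"
    and "f \<in> mpolys n"
    and "f \<noteq> (\<lambda>_. 0)"
    and "homogeneous n f"
  shows "bfunction n (\<lambda>_. 1) (Ann_inv n f) = [:of_nat d, 1:] \<longleftrightarrow> total_degree n f = d"
proof -
  interpret mainctx n f using assms by unfold_locales
  define B :: "complex poly" where "B = [:of_nat (total_degree n f), 1:]"
  have n0: "0 < n" using assms(1) by simp
  have E0: "eval_s n (\<lambda>_. 1) B \<noteq> (\<lambda>_. 0)"
  proof
    assume "eval_s n (\<lambda>_. 1) B = (\<lambda>_. 0)"
    then have "eval_s n (\<lambda>_. 1) B (ev 0, ev 0) = 0" by simp
    then show False using E_nz[OF n0, of "of_nat (total_degree n f)"] unfolding B_def by simp
  qed
  have "eval_s n (\<lambda>_. 1) B \<in> {init_form n (\<lambda>_. 1) P | P. P \<in> Ann_inv n f \<and> P \<noteq> (\<lambda>_. 0)}"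
  proof -
    have "eval_s n (\<lambda>_. 1) B = init_form n (\<lambda>_. 1) (eval_s n (\<lambda>_. 1) B)"
      unfolding B_def by (rule E_init[OF n0, symmetric])
    moreover have "eval_s n (\<lambda>_. 1) B \<in> Ann_inv n f" unfolding B_def by (rule E_Ann)
    ultimately show ?thesis using E0 by blast
  qed
  then have EI: "eval_s n (\<lambda>_. 1) B \<in> init_ideal n (\<lambda>_. 1) (Ann_inv n f)"
    unfolding init_ideal_def by (rule lideal.gen)
  have one: "weyl_one \<notin> init_ideal n (\<lambda>_. 1) (Ann_inv n f)"
    using init_ideal_Ann one_notin by blast
  have bf: "bfunction n (\<lambda>_. 1) (Ann_inv n f) = B"
    by (rule bfunction_eq[OF EI _ _ one]) (simp_all add: B_def)
  show ?thesis unfolding bf B_def by simp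
qed

end
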